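(* Assume the step size satisfies $$0<\alpha<\min\Big\{\frac{1+\lambda_{\min}(W)}{L_f},\ \frac{2}{L_f+m_f}\Big\},$$ and suppose there is $\sigma\in[0,\infty)$ with $\|\mathbf{x}^*(t_{k+1})-\mathbf{x}^*(t_k)\|\le\sigma$ and $\|\tilde{\mathbf{x}}(t_{k+1})-\tilde{\mathbf{x}}(t_k)\|\le\sigma$ for all $k\in\mathbb{N}$, and that $\sigma' := \sup_{k\in\mathbb{N}}\|(I-W)\tilde{\mathbf{x}}(t_k)\|<\infty$. Consider the online inexact DPGM with $M_o\ge1$ inner steps: given $\mathbf{x}(t_k)\in\mathbb{R}^N$, set $\mathbf{x}^0=\mathbf{x}(t_k)$ and for $\ell=0,\dots,M_o-1$ $$\mathbf{x}^{\ell+1} = \operatorname{prox}_{\alpha g(\cdot;t_{k+1})}\big(W\mathbf{x}^\ell - \alpha\nabla f(\mathbf{x}^\ell;t_{k+1})\big) + \mathbf{e}^\ell,$$ where the $\mathbf{e}^\ell$ (which may depend on $k$) are random vectors with $\mathbb{E}[\|\mathbf{e}^\ell\|]\le\eta$; then set $\mathbf{x}(t_{k+1}) = \mathbf{x}^{M_o}$. Define $$d(t_k) := \big[\|\bar{\mathbf{x}}(t_k)-\mathbf{x}^*(t_k)\|,\ \|\mathbf{x}(t_k)-\bar{\mathbf{x}}(t_k)\|,\ \|\mathbf{x}(t_k)-\tilde{\mathbf{x}}(t_k)\|\big]^\top,$$ $$b'' := \sum_{\ell=0}^{M_o-1} A^{M_o-\ell-1}\Big(\begin{bmatrix}2\alpha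 L_g\\ 2\alpha L_g+\sigma'\\0\end{bmatrix} + \eta\mathbf{1}_3\Big) + A^{M_o}\begin{bmatrix}\sigma\\0\\\sigma\end{bmatrix}.$$ Then, whenever the expectations are finite, for every $k$, entrywise, $$\mathbb{E}[d(t_{k+1})]\le A^{M_o}\,\mathbb{E}[d(t_k)] + b'',\qquad \mathbb{E}[\|\mathbf{x}(t_{k+1})-\mathbf{x}^*(t_{k+1})\|]\le[1\ 1\ 0]\,\mathbb{E}[d(t_{k+1})],$$ and $A^{M_o}$ has all eigenvalues strictly inside the unit circle (so the tracking error converges R-linearly to a neighborhood of the optimal trajectory).
   Context: $N\ge2$ agents over a fixed undirected connected graph $\mathcal{G}=(\mathcal{V},\mathcal{E})$. $W\in\mathbb{R}^{N\times N}$ is a symmetric doubly stochastic matrix (nonnegative entries, rows and columns summing to $1$) with $w_{ij}=0$ for $i\ne j$, $(i,j)\notin\mathcal{E}$, and $\rho(W):=\|W-\tfrac1N\mathbf{1}\mathbf{1}^\top\|\in(0,1)$; $\lambda_{\min}(W)$ its smallest eigenvalue; $I$ the identity. For each $k\in\mathbb{N}$ (time $t_k$) and each $i$: $f_i(\cdot;t_k):\mathbb{R}\to\mathbb{R}$ is $L_{f_i}$-smooth and $m_{f_i}$-strongly convex and $g_i(\cdot;t_k):\mathbb{R}\to\mathbb{R}$ is closed, convex, proper and Lipschitz, with constants independent of $k$; $f(\mathbf{x};t_k)=\sum_i f_i(x_i;t_k)$, $g(\mathbf{x};t_k)=\sum_i g_i(x_i;t_k)$; $L_f=\max_iL_{f_i}$,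 $m_f=\min_im_{f_i}$, and $L_g\ge0$ is a constant such that each $g(\cdot;t_k)$ is $L_g$-Lipschitz on $\mathbb{R}^N$ (Euclidean norm). $x^*(t_k)$ is the unique minimizer of $\sum_i(f_i(\cdot;t_k)+g_i(\cdot;t_k))$ over $\mathbb{R}$ and $\mathbf{x}^*(t_k)=x^*(t_k)\mathbf{1}$. $\varphi_\alpha(\mathbf{x};t_k)=\tfrac12\mathbf{x}^\top(I-W)\mathbf{x}+\alpha f(\mathbf{x};t_k)$ and $\tilde{\mathbf{x}}(t_k)=\arg\min_{\mathbf{x}\in\mathbb{R}^N}\{\varphi_\alpha(\mathbf{x};t_k)+\alpha g(\mathbf{x};t_k)\}$. $\bar{\mathbf{x}}(t_k)=\tfrac1N\mathbf{1}\mathbf{1}^\top\mathbf{x}(t_k)$. $A := \begin{bmatrix} c & \alpha L_f & 0\\ 0&\rho(W)&\alpha L_f\\0&0&\zeta_\varphi\end{bmatrix}$ with $c=\sqrt{1-2\alpha m_fL_f/(m_f+L_f)}$, $\zeta_\varphi=\max\{|1-L_\varphi|,|1-m_\varphi|\}$, $L_\varphi=1-\lambda_{\min}(W)+\alpha L_f$, $m_\varphi=\alpha m_f$. $\mathbf{1}_3$ is the all-ones vector of $\mathbb{R}^3$. $\operatorname{prox}_{\alpha h}(\mathbf{y})=\arg\min_{\mathbf{x}}\{h(\mathbf{x})+\tfrac{1}{2\alpha}\|\mathbf{x}-\mathbf{y}\|^2\}$. Vector inequalities are entrywise. *)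

theory Defs
  imports "HOL-Analysis.Analysis" "HOL-Probability.Probability"
begin

definition avg_mat :: "real^'n^'n" where
  "avg_mat = (\<chi> i j. 1 / real CARD('n))"

definition rhoW :: "real^'n^'n \<Rightarrow> real" where
  "rhoW W = onorm (\<lambda>x. (W - avg_mat) *v x)"

definition lambda_min :: "real^'n^'n \<Rightarrow> real" where
  "lambda_min W = Min {l. \<exists>v. v \<noteq> 0 \<and> W *v v = l *s v}"

primrec mpow :: "real^'m^'m \<Rightarrow> nat \<Rightarrow> real^'m^'m" where
  "mpow A 0 = mat 1"
| "mpow A (Suc n) = A ** mpow A n"

definition prox :: "(real^'n \<Rightarrow> real) \<Rightarrow> real \<Rightarrow> real^'n \<Rightarrow> real^'n" where
  "prox h \<alpha> y = (THE x. \<forall>z. h x + (norm (x - y))\<^sup>2 / (2 * \<alpha>) \<le> h z + (norm (z - y))\<^sup>2 / (2 * \<alpha>))"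

section \<open>Problem data (f, g indexed by time step k and agent i)\<close>

definition fsum :: "(nat \<Rightarrow> 'n \<Rightarrow> real \<Rightarrow> real) \<Rightarrow> nat \<Rightarrow> real^'n \<Rightarrow> real" where
  "fsum f k x = (\<Sum>i\<in>UNIV. f k i (x $ i))"

definition gsum :: "(nat \<Rightarrow> 'n \<Rightarrow> real \<Rightarrow> real) \<Rightarrow> nat \<Rightarrow> real^'n \<Rightarrow> real" where
  "gsum g k x = (\<Sum>i\<in>UNIV. g k i (x $ i))"

definition gradf :: "(nat \<Rightarrow> 'n \<Rightarrow> real \<Rightarrow> real) \<Rightarrow> nat \<Rightarrow> real^'n \<Rightarrow> real^'n" where
  "gradf f k x = (\<chi> i. deriv (f k i) (x $ i))"

definition xstar :: "(nat \<Rightarrow> 'n::finite \<Rightarrow> real \<Rightarrow> real) \<Rightarrow> (nat \<Rightarrow> 'n \<Rightarrow> real \<Rightarrow> real) \<Rightarrow> nat \<Rightarrow> real" where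
  "xstar f g k = (THE x. \<forall>y. (\<Sum>i\<in>UNIV. f k i x + g k i x) \<le> (\<Sum>i\<in>UNIV. f k i y + g k i y))"

definition xstar_vec :: "(nat \<Rightarrow> 'n::finite \<Rightarrow> real \<Rightarrow> real) \<Rightarrow> (nat \<Rightarrow> 'n \<Rightarrow> real \<Rightarrow> real) \<Rightarrow> nat \<Rightarrow> real^'n" where
  "xstar_vec f g k = (\<chi> i. xstar f g k)"

definition phi :: "real^'n^'n \<Rightarrow> real \<Rightarrow> (nat \<Rightarrow> 'n \<Rightarrow> real \<Rightarrow> real) \<Rightarrow> nat \<Rightarrow> real^'n \<Rightarrow> real" where
  "phi W \<alpha> f k x = (1/2) * (x \<bullet> ((mat 1 - W) *v x)) + \<alpha> * fsum f k x"

definition xtilde :: "real^'n^'n \<Rightarrow> real \<Rightarrow> (nat \<Rightarrow> 'n \<Rightarrow> real \<Rightarrow> real) \<Rightarrow> (nat \<Rightarrow> 'n \<Rightarrow> real \<Rightarrow> real) \<Rightarrow> nat \<Rightarrow> real^'n" where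
  "xtilde W \<alpha> f g k = (THE x. \<forall>y. phi W \<alpha> f k x + \<alpha> * gsum g k x \<le> phi W \<alpha> f k y + \<alpha> * gsum g k y)"

definition xbar :: "real^'n \<Rightarrow> real^'n" where
  "xbar x = avg_mat *v x"

text \<open>One inexact proximal-gradient step using the data at time index k
  (in the algorithm this is k+1), with additive error e.\<close>
definition dpgm_step :: "real^'n^'n \<Rightarrow> real \<Rightarrow> (nat \<Rightarrow> 'n \<Rightarrow> real \<Rightarrow> real) \<Rightarrow> (nat \<Rightarrow> 'n \<Rightarrow> real \<Rightarrow> real)
    \<Rightarrow> nat \<Rightarrow> real^'n \<Rightarrow> real^'n \<Rightarrow> real^'n" where
  "dpgm_step W \<alpha> f g k e x = prox (gsum g k) \<alpha> (W *v x - \<alpha> *\<^sub>R gradf f k x) + e"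

primrec dpgm_inner :: "real^'n^'n \<Rightarrow> real \<Rightarrow> (nat \<Rightarrow> 'n \<Rightarrow> real \<Rightarrow> real) \<Rightarrow> (nat \<Rightarrow> 'n \<Rightarrow> real \<Rightarrow> real)
    \<Rightarrow> nat \<Rightarrow> (nat \<Rightarrow> real^'n) \<Rightarrow> real^'n \<Rightarrow> nat \<Rightarrow> real^'n" where
  "dpgm_inner W \<alpha> f g k es x0 0 = x0"
| "dpgm_inner W \<alpha> f g k es x0 (Suc l) = dpgm_step W \<alpha> f g k (es l) (dpgm_inner W \<alpha> f g k es x0 l)"

definition dvec :: "real^'n^'n \<Rightarrow> real \<Rightarrow> (nat \<Rightarrow> 'n \<Rightarrow> real \<Rightarrow> real) \<Rightarrow> (nat \<Rightarrow> 'n \<Rightarrow> real \<Rightarrow> real)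
    \<Rightarrow> nat \<Rightarrow> real^'n \<Rightarrow> real^3" where
  "dvec W \<alpha> f g k x = vector [norm (xbar x - xstar_vec f g k), norm (x - xbar x), norm (x - xtilde W \<alpha> f g k)]"

definition Amat :: "real \<Rightarrow> real \<Rightarrow> real \<Rightarrow> real \<Rightarrow> real \<Rightarrow> real^3^3" where
  "Amat \<alpha> Lf mf rho lmin = (let c = sqrt (1 - 2 * \<alpha> * mf * Lf / (mf + Lf));
       L\<phi> = 1 - lmin + \<alpha> * Lf; m\<phi> = \<alpha> * mf; \<zeta> = max \<bar>1 - L\<phi>\<bar> \<bar>1 - m\<phi>\<bar> in
     vector [vector [c, \<alpha> * Lf, 0], vector [0, rho, \<alpha> * Lf], vector [0, 0, \<zeta>]])"

definition cmat :: "real^'m^'m \<Rightarrow> complex^'m^'m" where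
  "cmat B = (\<chi> i j. complex_of_real (B $ i $ j))"

end

theory Submission
  imports Defs
begin
lemma norm2_vec: "(norm (x::real^'n))^2 = (\<Sum>i\<in>UNIV. (x$i)^2)"
  unfolding power2_norm_eq_inner inner_vec_def by (simp add: power2_eq_square)

lemma norm_const_vec: "norm ((\<chi> i. c)::real^'n) = sqrt (real CARD('n)) * \<bar>c\<bar>"
proof -
  have "(norm ((\<chi> i. c)::real^'n))^2 = real CARD('n) * c^2" by (simp add: norm2_vec)
  then have "norm ((\<chi> i. c)::real^'n) = sqrt (real CARD('n) * c^2)"
    by (metis norm_ge_zero real_sqrt_unique)
  then show ?thesis by (simp add: real_sqrt_mult)
qed

lemma avg_mv: "avg_mat *v (x::real^'n) = (\<chi> i. (\<Sum>j\<in>UNIV. x$j) / real CARD('n))"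
  by (simp add: avg_mat_def matrix_vector_mult_def vec_eq_iff sum_divide_distrib)

lemma avg_idem: "avg_mat *v (avg_mat *v (x::real^'n)) = avg_mat *v x"
  by (simp add: avg_mv vec_eq_iff)

lemma avg_orth: "(x - avg_mat *v x) \<bullet> (avg_mat *v (x::real^'n)) = 0"
proof -
  have "(x - avg_mat *v x) \<bullet> (avg_mat *v x) = (\<Sum>i\<in>UNIV. (x$i - (\<Sum>j\<in>UNIV. x$j) / real CARD('n)) * ((\<Sum>j\<in>UNIV. x$j) / real CARD('n)))"
    by (simp add: avg_mv inner_vec_def)
  also have "\<dots> = (\<Sum>i\<in>UNIV. (x$i - (\<Sum>j\<in>UNIV. x$j) / real CARD('n))) * ((\<Sum>j\<in>UNIV. x$j) / real CARD('n))"
    by (simp only: sum_distrib_right)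
  also have "(\<Sum>i\<in>UNIV. (x$i - (\<Sum>j\<in>UNIV. x$j) / real CARD('n))) = 0"
    by (simp add: sum_subtractf)
  finally show ?thesis by simp
qed

lemma avg_pyth: "(norm (x::real^'n))^2 = (norm (avg_mat *v x))^2 + (norm (x - avg_mat *v x))^2"
proof -
  have "x = avg_mat *v x + (x - avg_mat *v x)" by simp
  then have "(norm x)^2 = (norm (avg_mat *v x + (x - avg_mat *v x)))^2" by simp
  also have "\<dots> = (norm (avg_mat *v x))^2 + (norm (x - avg_mat *v x))^2"
    using avg_orth[of x] dot_norm[of "x - avg_mat *v x" "avg_mat *v x"] by (simp add: add.commute)
  finally show ?thesis .
qed

lemma avg_norm_le: "norm (avg_mat *v (x::real^'n)) \<le> norm x"
  using avg_pyth[of x] by (metis le_add_same_cancel1 norm_ge_zero power2_le_imp_le zero_le_power2)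

lemma avg_res_norm_le: "norm (x - avg_mat *v (x::real^'n)) \<le> norm x"
  using avg_pyth[of x] by (metis le_add_same_cancel2 norm_ge_zero power2_le_imp_le zero_le_power2)

lemma avg_const: "avg_mat *v ((\<chi> i. c)::real^'n) = (\<chi> i. c)"
  by (simp add: avg_mv vec_eq_iff)

lemma avg_W:
  assumes "\<And>j. (\<Sum>i\<in>UNIV. W $ i $ j) = 1"
  shows "avg_mat *v (W *v (x::real^'n)) = avg_mat *v x"
proof -
  have "(\<Sum>j\<in>UNIV. (W *v x)$j) = (\<Sum>i\<in>UNIV. x$i)"
    by (simp add: matrix_vector_mult_def sum.swap[of _ UNIV UNIV] sum_distrib_right[symmetric] assms)
  then show ?thesis by (simp add: avg_mv)
qed

lemma W_avg:
  assumes "\<And>i. (\<Sum>j\<in>UNIV. W $ i $ j) = 1"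
  shows "W *v (avg_mat *v (x::real^'n)) = avg_mat *v x"
  unfolding avg_mv by (simp add: matrix_vector_mult_def vec_eq_iff sum_distrib_right[symmetric] assms del: times_divide_eq_right)

lemma sf_tangent:
  fixes \<phi> :: "real \<Rightarrow> real"
  assumes d: "\<And>y. \<phi> differentiable (at y)" and sc: "convex_on UNIV (\<lambda>y. \<phi> y - m/2*y^2)"
  shows "\<phi> y \<ge> \<phi> x + deriv \<phi> x * (y - x) + m/2*(y-x)^2"
proof -
  have d1: "(\<phi> has_real_derivative deriv \<phi> x) (at x)"
    using d DERIV_deriv_iff_real_differentiable by blast
  have D: "((\<lambda>y. \<phi> y - m/2*y^2) has_field_derivative (deriv \<phi> x - m*x)) (at x within UNIV)"
    using d1 by (auto intro!: derivative_eq_intros)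
  from convex_on_imp_above_tangent[OF sc _ _ _ D]
  have "\<phi> y - m/2*y^2 - (\<phi> x - m/2*x^2) \<ge> (deriv \<phi> x - m*x)*(y-x)" by auto
  moreover have "m/2*y^2 - m/2*x^2 + (deriv \<phi> x - m*x)*(y-x) = deriv \<phi> x*(y-x) + m/2*(y-x)^2"
    by (simp add: power2_eq_square algebra_simps)
  ultimately show ?thesis by linarith
qed

lemma sf_mono:
  fixes \<phi> :: "real \<Rightarrow> real"
  assumes d: "\<And>y. \<phi> differentiable (at y)" and sc: "convex_on UNIV (\<lambda>y. \<phi> y - m/2*y^2)"
  shows "(deriv \<phi> x - deriv \<phi> y) * (x - y) \<ge> m * (x-y)^2"
proof -
  have "\<phi> y \<ge> \<phi> x + deriv \<phi> x * (y - x) + m/2*(y-x)^2" by (rule sf_tangent[OF d sc])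
  moreover have "\<phi> x \<ge> \<phi> y + deriv \<phi> y * (x - y) + m/2*(x-y)^2" by (rule sf_tangent[OF d sc])
  ultimately show ?thesis by (simp add: power2_eq_square algebra_simps)
qed

lemma sf_upper:
  fixes \<phi> :: "real \<Rightarrow> real"
  assumes d: "\<And>y. \<phi> differentiable (at y)" and sc: "convex_on UNIV (\<lambda>y. \<phi> y - m/2*y^2)"
    and m: "m \<ge> 0" and L: "\<And>y z. \<bar>deriv \<phi> y - deriv \<phi> z\<bar> \<le> L * \<bar>y - z\<bar>"
  shows "\<phi> (x + t) - \<phi> x \<le> deriv \<phi> x * t + L * t^2"
proof -
  have "\<phi> x \<ge> \<phi> (x+t) + deriv \<phi> (x+t) * (x - (x+t)) + m/2*(x-(x+t))^2" by (rule sf_tangent[OF d sc])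
  moreover have "0 \<le> m/2*(x-(x+t))^2" using m by simp
  moreover have "deriv \<phi> (x+t) * (x - (x+t)) = - (deriv \<phi> (x+t) * t)" by simp
  ultimately have 1: "\<phi> (x + t) - \<phi> x \<le> deriv \<phi> (x+t) * t" by linarith
  have "(deriv \<phi> (x+t) - deriv \<phi> x) * t \<le> \<bar>deriv \<phi> (x+t) - deriv \<phi> x\<bar> * \<bar>t\<bar>"
    by (metis abs_ge_self abs_mult)
  also have "\<dots> \<le> L * \<bar>t\<bar> * \<bar>t\<bar>" using L[of "x+t" x] by (simp add: mult_right_mono)
  finally have "(deriv \<phi> (x+t) - deriv \<phi> x) * t \<le> L * t^2" by (simp add: power2_eq_square abs_mult_self_eq)
  with 1 show ?thesis by (simp add: algebra_simps)
qed

lemma sf_Lm: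
  fixes \<phi> :: "real \<Rightarrow> real"
  assumes d: "\<And>y. \<phi> differentiable (at y)" and sc: "convex_on UNIV (\<lambda>y. \<phi> y - m/2*y^2)"
    and L: "\<And>y z. \<bar>deriv \<phi> y - deriv \<phi> z\<bar> \<le> L * \<bar>y - z\<bar>"
  shows "m \<le> L"
proof -
  have "m * (1-0)^2 \<le> (deriv \<phi> 1 - deriv \<phi> 0) * (1 - 0)" by (rule sf_mono[OF d sc])
  also have "\<dots> \<le> L" using L[of 1 0] by simp
  finally show ?thesis by simp
qed

lemma sf_midpoint:
  fixes \<phi> :: "real \<Rightarrow> real"
  assumes sc: "convex_on UNIV (\<lambda>y. \<phi> y - m/2*y^2)"
  shows "\<phi> ((a+b)/2) \<le> (\<phi> a + \<phi> b)/2 - m/8*(a-b)^2"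
proof -
  have "(\<lambda>y. \<phi> y - m/2*y^2) ((1 - 1/2) *\<^sub>R a + (1/2) *\<^sub>R b) \<le> (1 - 1/2) * (\<lambda>y. \<phi> y - m/2*y^2) a + (1/2) * (\<lambda>y. \<phi> y - m/2*y^2) b"
    by (rule convex_onD[OF sc]) auto
  then show ?thesis by (simp add: power2_eq_square field_simps)
qed

lemma convex_midpoint:
  fixes G :: "'a::real_vector \<Rightarrow> real"
  assumes "convex_on UNIV G"
  shows "G ((1/2) *\<^sub>R (a + b)) \<le> (G a + G b)/2"
proof -
  have "G ((1 - 1/2) *\<^sub>R a + (1/2) *\<^sub>R b) \<le> (1 - 1/2) * G a + (1/2) * G b"
    by (rule convex_onD[OF assms]) auto
  then show ?thesis by (simp add: scaleR_add_right)
qed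

lemma min_VI:
  fixes G Q :: "'a::real_vector \<Rightarrow> real"
  assumes min: "\<And>z. G p + Q p \<le> G z + Q z" and cvx: "convex_on UNIV G"
    and Qb: "\<And>t. 0 < t \<Longrightarrow> t \<le> 1 \<Longrightarrow> Q (p + t *\<^sub>R d) - Q p \<le> t * D + t^2 * C"
  shows "G (p + d) - G p + D \<ge> 0"
proof (rule ccontr)
  define X where "X = G (p + d) - G p + D"
  assume "\<not> G (p + d) - G p + D \<ge> 0"
  then have X: "X < 0" by (simp add: X_def)
  have key: "0 \<le> X + t * C" if t: "0 < t" "t \<le> 1" for t
  proof -
    have "G ((1 - t) *\<^sub>R p + t *\<^sub>R (p + d)) \<le> (1 - t) * G p + t * G (p + d)"
      by (rule convex_onD[OF cvx]) (use t in auto)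
    moreover have "(1 - t) *\<^sub>R p + t *\<^sub>R (p + d) = p + t *\<^sub>R d" by (simp add: algebra_simps)
    ultimately have g: "G (p + t *\<^sub>R d) \<le> G p + t * (G (p + d) - G p)" by (simp add: algebra_simps)
    have "G p + Q p \<le> G (p + t *\<^sub>R d) + Q (p + t *\<^sub>R d)" by (rule min)
    with g Qb[OF t] have "0 \<le> t * (G (p + d) - G p) + t * D + t^2 * C" by linarith
    then have "0 \<le> t * (X + t * C)" by (simp add: X_def algebra_simps power2_eq_square)
    then show ?thesis using t by (simp add: zero_le_mult_iff)
  qed
  define t where "t = min 1 (- X / (2 * (\<bar>C\<bar> + 1)))"
  have "0 < - X / (2 * (\<bar>C\<bar> + 1))" using X by (intro divide_pos_pos) auto
  then have t0: "0 < t" by (simp add: t_def)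
  have t1: "t \<le> 1" by (simp add: t_def)
  have "t * C \<le> t * \<bar>C\<bar>" using t0 by (simp add: mult_left_mono)
  also have "\<dots> \<le> (- X / (2 * (\<bar>C\<bar> + 1))) * \<bar>C\<bar>"
  proof -
    have "t \<le> - X / (2 * (\<bar>C\<bar> + 1))" unfolding t_def by (rule min.cobounded2)
    from mult_right_mono[OF this abs_ge_zero] show ?thesis .
  qed
  also have "\<dots> \<le> - X / 2"
  proof -
    have "(- X / (2 * (\<bar>C\<bar> + 1))) * \<bar>C\<bar> = (-X/2) * (\<bar>C\<bar> / (\<bar>C\<bar> + 1))" by (simp add: field_simps)
    also have "\<dots> \<le> (-X/2) * 1" using X by (intro mult_left_mono) auto
    finally show ?thesis by simp
  qed
  finally have "X + t * C < 0" using X by linarith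
  with key[OF t0 t1] show False by simp
qed

lemma exists_min:
  fixes \<Psi> :: "'a::euclidean_space \<Rightarrow> real"
  assumes cont: "continuous_on UNIV \<Psi>"
    and lb: "\<And>x. \<Psi> x \<ge> a * (norm x)^2 - b * norm x + c0" and a: "a > 0"
  shows "\<exists>p. \<forall>z. \<Psi> p \<le> \<Psi> z"
proof -
  define R where "R = (\<bar>b\<bar> + \<bar>\<Psi> 0 - c0\<bar> + 1) / a + 1"
  have R1: "R \<ge> 1" using a by (simp add: R_def)
  have out: "\<Psi> 0 \<le> \<Psi> x" if "norm x > R" for x
  proof -
    let ?n = "norm x"
    have "a * R = \<bar>b\<bar> + \<bar>\<Psi> 0 - c0\<bar> + 1 + a" using a by (simp add: R_def field_simps)
    moreover have "a * R < a * ?n" using mult_strict_left_mono[OF that a] .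
    ultimately have "a * ?n \<ge> \<bar>b\<bar> + \<bar>\<Psi> 0 - c0\<bar> + 1" using a by linarith
    then have "a * ?n - b \<ge> \<bar>\<Psi> 0 - c0\<bar> + 1" by linarith
    then have "?n * (a * ?n - b) \<ge> ?n * (\<bar>\<Psi> 0 - c0\<bar> + 1)" by (simp add: mult_left_mono)
    moreover have "?n * (\<bar>\<Psi> 0 - c0\<bar> + 1) \<ge> 1 * (\<bar>\<Psi> 0 - c0\<bar> + 1)"
      using that R1 by (intro mult_right_mono) auto
    ultimately have "a * ?n^2 - b * ?n \<ge> \<bar>\<Psi> 0 - c0\<bar> + 1" by (simp add: power2_eq_square algebra_simps)
    with lb[of x] show ?thesis by linarith
  qed
  have "compact (cball (0::'a) R)" by simp
  moreover have "cball (0::'a) R \<noteq> {}" using R1 by simp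
  moreover have "continuous_on (cball 0 R) \<Psi>" using cont continuous_on_subset by blast
  ultimately obtain p where p: "p \<in> cball 0 R" "\<And>y. y \<in> cball 0 R \<Longrightarrow> \<Psi> p \<le> \<Psi> y"
    using continuous_attains_inf by metis
  have "\<Psi> p \<le> \<Psi> z" for z
  proof (cases "norm z \<le> R")
    case True then show ?thesis using p by simp
  next
    case False
    then have "\<Psi> 0 \<le> \<Psi> z" using out by simp
    moreover have "\<Psi> p \<le> \<Psi> 0" using p R1 by simp
    ultimately show ?thesis by simp
  qed
  then show ?thesis by blast
qed

lemma sym_norm_bound:
  fixes T :: "real^'n^'n"
  assumes sym: "transpose T = T" and q: "\<And>w. \<bar>w \<bullet> (T *v w)\<bar> \<le> z * (norm w)^2"
  shows "norm (T *v w) \<le> z * norm w"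
proof (cases "T *v w = 0")
  case True
  show ?thesis
  proof (cases "w = 0")
    case True then show ?thesis by simp
  next
    case False
    then have "0 < (norm w)^2" by simp
    moreover have "0 \<le> z * (norm w)^2" using q[of w] by linarith
    ultimately have "0 \<le> z" by (simp add: zero_le_mult_iff)
    then show ?thesis using \<open>T *v w = 0\<close> by simp
  qed
next
  case False
  have symm: "u \<bullet> (T *v v) = (T *v u) \<bullet> v" for u v
    by (metis dot_lmul_matrix inner_commute sym transpose_matrix_vector)
  define u where "u = (norm w / norm (T *v w)) *\<^sub>R (T *v w)"
  have nu: "norm u = norm w" using False by (simp add: u_def)
  have "4 * (u \<bullet> (T *v w)) = (u + w) \<bullet> (T *v (u + w)) - (u - w) \<bullet> (T *v (u - w))"
    using symm[of u w] symm[of w u]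
    by (simp add: matrix_vector_right_distrib matrix_vector_mult_diff_distrib inner_add_left inner_add_right inner_diff_left inner_diff_right inner_commute)
  also have "\<dots> \<le> z * (norm (u+w))^2 + z * (norm (u - w))^2"
    using q[of "u+w"] q[of "u-w"] by linarith
  also have "\<dots> = 2 * z * ((norm u)^2 + (norm w)^2)"
    by (simp add: power2_norm_eq_inner inner_add_left inner_add_right inner_diff_left inner_diff_right inner_commute algebra_simps)
  finally have "4 * (u \<bullet> (T *v w)) \<le> 4 * z * (norm w)^2" using nu by simp
  moreover have "u \<bullet> (T *v w) = norm w * norm (T *v w)"
    using False by (simp add: u_def power2_norm_eq_inner[symmetric] power2_eq_square)
  ultimately have "norm w * norm (T *v w) \<le> z * norm w * norm w" by (simp add: power2_eq_square)
  moreover have "w \<noteq> 0" using False by auto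
  ultimately show ?thesis by (simp add: mult.commute mult_le_cancel_left_pos)
qed

lemma scalar_contr:
  fixes m L \<alpha> \<delta> u :: real
  assumes m: "m > 0" and mL: "m \<le> L" and a: "0 < \<alpha>" "\<alpha> \<le> 2 / (m + L)"
    and mono: "m * \<delta>^2 \<le> u * \<delta>" and lip: "\<bar>u\<bar> \<le> L * \<bar>\<delta>\<bar>"
  shows "\<bar>\<delta> - \<alpha> * u\<bar> \<le> sqrt (1 - 2 * \<alpha> * m * L / (m + L)) * \<bar>\<delta>\<bar>"
proof -
  have mLp: "m + L > 0" using m mL by simp
  have prod: "(u - m*\<delta>) * (L*\<delta> - u) \<ge> 0"
  proof (cases "\<delta> = 0")
    case True then show ?thesis using lip by simp
  next
    case dn: False
    show ?thesis
  proof (cases "\<delta> \<ge> 0")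
    case True
    then have "u \<le> L * \<delta>" using lip by (simp add: abs_le_iff)
    moreover have "u \<ge> m * \<delta>" if "\<delta> > 0" using mono that by (simp add: power2_eq_square mult_le_cancel_right)
    ultimately show ?thesis using True dn by (auto intro!: mult_nonneg_nonneg)
  next
    case False
    then have "u \<ge> L * \<delta>" using lip by (simp add: abs_le_iff)
    moreover have "u \<le> m * \<delta>" using mono False by (simp add: power2_eq_square mult_le_cancel_right)
    ultimately show ?thesis by (simp add: mult_nonpos_nonpos)
  qed
  qed
  have u2: "u^2 \<le> (m+L)*u*\<delta> - m*L*\<delta>^2" using prod by (simp add: power2_eq_square algebra_simps)
  have "\<alpha> * u^2 \<le> (2/(m+L)) * u^2" using a(2) by (rule mult_right_mono) simp
  also have "\<dots> \<le> (2/(m+L)) * ((m+L)*u*\<delta> - m*L*\<delta>^2)" using mult_left_mono[OF u2, of "2/(m+L)"] mLp by simp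
  also have "\<dots> = 2*u*\<delta> - 2*m*L*\<delta>^2/(m+L)" using mLp by (simp add: field_simps)
  finally have "\<alpha> * u^2 \<le> 2*u*\<delta> - 2*m*L*\<delta>^2/(m+L)" .
  then have "\<alpha> * (\<alpha> * u^2) \<le> \<alpha> * (2*u*\<delta> - 2*m*L*\<delta>^2/(m+L))" using a by (simp add: mult_left_mono)
  moreover have e1: "(\<delta> - \<alpha> * u)^2 = \<delta>^2 - 2*\<alpha>*u*\<delta> + \<alpha>*(\<alpha>*u^2)"
    by (simp add: power2_eq_square algebra_simps)
  moreover have e2: "\<alpha> * (2*u*\<delta> - 2*m*L*\<delta>^2/(m+L)) = 2*\<alpha>*u*\<delta> - \<alpha>*(2*m*L*\<delta>^2/(m+L))"
    by (simp add: right_diff_distrib)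
  moreover have e3: "(1 - 2 * \<alpha> * m * L / (m + L)) * \<delta>^2 = \<delta>^2 - \<alpha>*(2*m*L*\<delta>^2/(m+L))"
    using mLp by (simp add: field_simps)
  ultimately have sq: "(\<delta> - \<alpha> * u)^2 \<le> (1 - 2 * \<alpha> * m * L / (m + L)) * \<delta>^2"
    by linarith
  have "\<bar>\<delta> - \<alpha> * u\<bar> = sqrt ((\<delta> - \<alpha> * u)^2)" by simp
  also have "\<dots> \<le> sqrt ((1 - 2 * \<alpha> * m * L / (m + L)) * \<delta>^2)" using sq by (rule real_sqrt_le_mono)
  also have "\<dots> = sqrt (1 - 2 * \<alpha> * m * L / (m + L)) * \<bar>\<delta>\<bar>" by (simp add: real_sqrt_mult)
  finally show ?thesis .
qed

locale setting =
  fixes W :: "real^'n^'n" and f g :: "nat \<Rightarrow> 'n \<Rightarrow> real \<Rightarrow> real" and Lfi mfi :: "'n \<Rightarrow> real"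
    and Lg \<alpha> :: real
  assumes W_sym: "transpose W = W"
    and W_nonneg: "\<And>i j. W $ i $ j \<ge> 0"
    and W_rows: "\<And>i. (\<Sum>j\<in>UNIV. W $ i $ j) = 1"
    and W_cols: "\<And>j. (\<Sum>i\<in>UNIV. W $ i $ j) = 1"
    and mfi_pos: "\<And>i. mfi i > 0"
    and f_diff: "\<And>k i y. f k i differentiable (at y)"
    and f_smooth: "\<And>k i y z. \<bar>deriv (f k i) y - deriv (f k i) z\<bar> \<le> Lfi i * \<bar>y - z\<bar>"
    and f_strong: "\<And>k i. convex_on UNIV (\<lambda>y. f k i y - mfi i / 2 * y\<^sup>2)"
    and g_convex: "\<And>k i. convex_on UNIV (g k i)"
    and g_lip: "\<And>i. \<exists>C. \<forall>k. C-lipschitz_on UNIV (g k i)"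
    and Lg_nonneg: "Lg \<ge> 0"
    and Lg_lip: "\<And>k. Lg-lipschitz_on UNIV (gsum g k)"
    and alpha_pos: "0 < \<alpha>"
begin

abbreviation "Lf \<equiv> Max (range Lfi)"
abbreviation "mf \<equiv> Min (range mfi)"

lemma Lfi_le: "Lfi i \<le> Lf" by (rule Max_ge) auto
lemma mf_le: "mf \<le> mfi i" by (rule Min_le) auto
lemma mf_pos: "mf > 0"
proof -
  have "mf \<in> range mfi" by (rule Min_in) auto
  then show ?thesis using mfi_pos by auto
qed
lemma mfi_le_Lfi: "mfi i \<le> Lfi i"
  by (rule sf_Lm[OF f_diff[of 0 i] f_strong[of 0 i] f_smooth[of 0 i]])
lemma mf_le_Lf: "mf \<le> Lf" using mf_le[of undefined] mfi_le_Lfi[of undefined] Lfi_le[of undefined] by linarith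
lemma Lf_pos: "Lf > 0" using mf_pos mf_le_Lf by linarith

lemma fd_lip: "\<bar>deriv (f k i) a - deriv (f k i) b\<bar> \<le> Lf * \<bar>a - b\<bar>"
  by (rule order_trans[OF f_smooth mult_right_mono[OF Lfi_le abs_ge_zero]])

lemma fd_mono: "mf * (a - b)^2 \<le> (deriv (f k i) a - deriv (f k i) b) * (a - b)"
proof -
  have "mfi i * (a-b)^2 \<le> (deriv (f k i) a - deriv (f k i) b) * (a - b)"
    by (rule sf_mono[OF f_diff f_strong])
  moreover have "mf * (a-b)^2 \<le> mfi i * (a-b)^2" using mf_le by (simp add: mult_right_mono)
  ultimately show ?thesis by linarith
qed

lemma gradf_nth: "gradf f k x $ i = deriv (f k i) (x $ i)"
  by (simp add: gradf_def)

lemma gradf_lip: "norm (gradf f k x - gradf f k y) \<le> Lf * norm (x - y)"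
proof -
  have "(norm (gradf f k x - gradf f k y))^2 = (\<Sum>i\<in>UNIV. (deriv (f k i) (x$i) - deriv (f k i) (y$i))^2)"
    by (simp add: norm2_vec gradf_nth)
  also have "\<dots> \<le> (\<Sum>i\<in>UNIV. (Lf * (x$i - y$i))^2)"
  proof (rule sum_mono)
    fix i
    have "\<bar>deriv (f k i) (x$i) - deriv (f k i) (y$i)\<bar> \<le> \<bar>Lf * (x$i - y$i)\<bar>"
      using fd_lip[of k i "x$i" "y$i"] Lf_pos by (simp add: abs_mult)
    then show "(deriv (f k i) (x$i) - deriv (f k i) (y$i))^2 \<le> (Lf * (x$i - y$i))^2"
      by (simp add: abs_le_square_iff)
  qed
  also have "\<dots> = (Lf * norm (x - y))^2"
    by (simp add: norm2_vec power_mult_distrib sum_distrib_left[symmetric])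
  finally have "(norm (gradf f k x - gradf f k y))^2 \<le> (Lf * norm (x - y))^2" .
  then show ?thesis by (rule power2_le_imp_le) (use Lf_pos in simp)
qed

lemma gsum_convex: "convex_on UNIV (gsum g k)"
proof (rule convex_onI)
  fix t :: real and x y :: "real^'n"
  assume t: "0 < t" "t < 1"
  have "gsum g k ((1 - t) *\<^sub>R x + t *\<^sub>R y) = (\<Sum>i\<in>UNIV. g k i ((1 - t) *\<^sub>R (x$i) + t *\<^sub>R (y$i)))"
    by (simp add: gsum_def)
  also have "\<dots> \<le> (\<Sum>i\<in>UNIV. (1 - t) * g k i (x$i) + t * g k i (y$i))"
    by (rule sum_mono, rule convex_onD[OF g_convex]) (use t in auto)
  also have "\<dots> = (1 - t) * gsum g k x + t * gsum g k y"
    by (simp add: gsum_def sum.distrib sum_distrib_left)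
  finally show "gsum g k ((1 - t) *\<^sub>R x + t *\<^sub>R y) \<le> (1 - t) * gsum g k x + t * gsum g k y" .
qed simp

lemma gsum_lip: "\<bar>gsum g k x - gsum g k y\<bar> \<le> Lg * norm (x - y)"
  using lipschitz_on_normD[OF Lg_lip[of k]] by simp

lemma gsum_cont: "continuous_on UNIV (gsum g k)"
  by (rule lipschitz_on_continuous_on[OF Lg_lip])

definition "Pp k y p \<longleftrightarrow> (\<forall>z. gsum g k p + (norm (p - y))\<^sup>2 / (2 * \<alpha>) \<le> gsum g k z + (norm (z - y))\<^sup>2 / (2 * \<alpha>))"

lemma prox_ex: "\<exists>p. Pp k y p"
proof -
  let ?\<Psi> = "\<lambda>x. gsum g k x + (norm (x - y))\<^sup>2 / (2 * \<alpha>)"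
  have c: "continuous_on UNIV ?\<Psi>" using alpha_pos by (auto intro!: continuous_intros gsum_cont)
  have lb: "?\<Psi> x \<ge> (1/(2*\<alpha>)) * (norm x)^2 - (Lg + norm y / \<alpha>) * norm x + gsum g k 0" for x
  proof -
    have "gsum g k x \<ge> gsum g k 0 - Lg * norm x" using gsum_lip[of k x 0] by simp
    moreover have "(norm (x - y))^2 \<ge> (norm x)^2 - 2 * norm y * norm x"
    proof -
      have "norm (x - y) \<ge> norm x - norm y" by (rule norm_triangle_ineq2)
      have "(norm (x - y))^2 = (norm x)^2 - 2 * (x \<bullet> y) + (norm y)^2"
        by (simp add: power2_norm_eq_inner inner_diff_left inner_diff_right inner_commute)
      moreover have "x \<bullet> y \<le> norm y * norm x" using norm_cauchy_schwarz[of x y] by (simp add: mult.commute)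
      moreover have "0 \<le> (norm y)^2" by simp
      ultimately show ?thesis by linarith
    qed
    then have "(norm (x - y))^2 / (2*\<alpha>) \<ge> ((norm x)^2 - 2 * norm y * norm x) / (2*\<alpha>)"
      using alpha_pos by (simp add: divide_right_mono)
    moreover have "((norm x)^2 - 2 * norm y * norm x) / (2*\<alpha>) = (1/(2*\<alpha>)) * (norm x)^2 - (norm y / \<alpha>) * norm x"
      using alpha_pos by (simp add: field_simps)
    ultimately show ?thesis by (simp add: algebra_simps)
  qed
  have "\<exists>p. \<forall>z. ?\<Psi> p \<le> ?\<Psi> z" by (rule exists_min[OF c lb]) (use alpha_pos in simp)
  then show ?thesis by (simp add: Pp_def)
qed

lemma midpoint_sq: "(norm ((1/2) *\<^sub>R (a + b) - y))^2 = ((norm (a - y))^2 + (norm (b - y))^2)/2 - (norm (a - b))^2 / 4"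
  for a b y :: "real^'n"
proof -
  have "(1/2) *\<^sub>R (a + b) - y = (1/2) *\<^sub>R ((a - y) + (b - y))" by (simp add: vec_eq_iff field_simps)
  then show ?thesis
    by (simp add: power2_norm_eq_inner inner_add_left inner_add_right inner_diff_left inner_diff_right inner_commute field_simps)
qed

lemma lin_aux: "(A::real) + a \<le> M + c \<Longrightarrow> B + b \<le> A + a \<Longrightarrow> A + a \<le> B + b \<Longrightarrow> M \<le> (A+B)/2 \<Longrightarrow> a + b \<le> 2*c"
  by (simp add: field_simps)

lemma div_aux: "(a::real)/(2*\<alpha>') + b/(2*\<alpha>') \<le> 2*(c/(2*\<alpha>')) \<Longrightarrow> \<alpha>' > 0 \<Longrightarrow> a + b \<le> 2*c"
proof -
  assume h: "a/(2*\<alpha>') + b/(2*\<alpha>') \<le> 2*(c/(2*\<alpha>'))" and p: "\<alpha>' > 0"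
  have "a/(2*\<alpha>') + b/(2*\<alpha>') - 2*(c/(2*\<alpha>')) = (a + b - 2*c)/(2*\<alpha>')"
    using p by (simp add: field_simps)
  with h have "(a + b - 2*c)/(2*\<alpha>') \<le> 0" by linarith
  with p have "a + b - 2*c \<le> 0" by (simp add: divide_le_0_iff)
  then show ?thesis by simp
qed

lemma sq_expand: "(norm (a + t *\<^sub>R b))^2 = (norm a)^2 + 2*t*(a \<bullet> b) + t^2*(norm b)^2" for a b :: "real^'n"
  unfolding power2_norm_eq_inner by (simp add: inner_add_left inner_add_right inner_commute power2_eq_square algebra_simps)

lemma prox_uniq: assumes "Pp k y p" "Pp k y q" shows "p = q"
proof -
  let ?m = "(1/2) *\<^sub>R (p + q)"
  have g: "gsum g k ?m \<le> (gsum g k p + gsum g k q)/2" by (rule convex_midpoint[OF gsum_convex])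
  have f1: "gsum g k p + (norm (p - y))\<^sup>2 / (2 * \<alpha>) \<le> gsum g k ?m + (norm (?m - y))\<^sup>2 / (2 * \<alpha>)"
    using assms(1) by (simp add: Pp_def)
  have f2: "gsum g k q + (norm (q - y))\<^sup>2 / (2 * \<alpha>) \<le> gsum g k p + (norm (p - y))\<^sup>2 / (2 * \<alpha>)"
    using assms(2) by (simp add: Pp_def)
  have f3: "gsum g k p + (norm (p - y))\<^sup>2 / (2 * \<alpha>) \<le> gsum g k q + (norm (q - y))\<^sup>2 / (2 * \<alpha>)"
    using assms(1) by (simp add: Pp_def)
  note aux = lin_aux[OF f1 f2 f3 g]
  have "(norm (p - y))\<^sup>2 / (2 * \<alpha>) + (norm (q - y))\<^sup>2 / (2 * \<alpha>) \<le> 2 * ((norm (?m - y))\<^sup>2 / (2 * \<alpha>))"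
    by (rule aux)
  then have "(norm (p - y))\<^sup>2 + (norm (q - y))\<^sup>2 \<le> 2 * (norm (?m - y))\<^sup>2"
    using alpha_pos by (rule div_aux)
  moreover have "2 * (norm (?m - y))\<^sup>2 = (norm (p - y))\<^sup>2 + (norm (q - y))\<^sup>2 - (norm (p - q))^2/2"
    by (simp add: midpoint_sq)
  ultimately have "(norm (p - q))^2 \<le> 0" by linarith
  then show ?thesis by simp
qed

lemma prox_P: "Pp k y (prox (gsum g k) \<alpha> y)"
proof -
  obtain p where p: "Pp k y p" using prox_ex by blast
  have "prox (gsum g k) \<alpha> y = p" unfolding prox_def
    by (rule the_equality) (use p prox_uniq in \<open>auto simp: Pp_def\<close>)
  then show ?thesis using p by simp
qed

lemma prox_eq_if_P: "Pp k y p \<Longrightarrow> prox (gsum g k) \<alpha> y = p"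
  using prox_P prox_uniq by blast

lemma prox_VI:
  assumes "Pp k y p"
  shows "gsum g k z - gsum g k p + ((p - y) \<bullet> (z - p)) / \<alpha> \<ge> 0"
proof -
  let ?Q = "\<lambda>x. (norm (x - y))\<^sup>2 / (2 * \<alpha>)"
  have "gsum g k (p + (z - p)) - gsum g k p + ((p - y) \<bullet> (z - p)) / \<alpha> \<ge> 0"
  proof (rule min_VI[where Q = ?Q and C = "(norm (z - p))^2 / (2*\<alpha>)"])
    show "gsum g k p + ?Q p \<le> gsum g k w + ?Q w" for w using assms by (simp add: Pp_def)
    show "convex_on UNIV (gsum g k)" by (rule gsum_convex)
    fix t :: real
    have eq: "p + t *\<^sub>R (z - p) - y = (p - y) + t *\<^sub>R (z - p)" by simp
    have "(norm (p + t *\<^sub>R (z - p) - y))^2 = (norm (p - y))^2 + 2 * t * ((p - y) \<bullet> (z - p)) + t^2 * (norm (z - p))^2"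
      unfolding eq by (rule sq_expand)
    then show "?Q (p + t *\<^sub>R (z - p)) - ?Q p \<le> t * (((p - y) \<bullet> (z - p)) / \<alpha>) + t^2 * ((norm (z - p))^2 / (2*\<alpha>))"
      using alpha_pos by (simp add: field_simps)
  qed
  then show ?thesis by simp
qed

lemma P_if_VI:
  assumes "\<And>z. gsum g k z - gsum g k p + ((p - y) \<bullet> (z - p)) / \<alpha> \<ge> 0"
  shows "Pp k y p"
  unfolding Pp_def
proof
  fix z
  have e: "(norm (z - y))^2 = (norm (p - y))^2 + 2 * ((p - y) \<bullet> (z - p)) + (norm (z - p))^2"
  proof -
    have eq: "z - y = (p - y) + 1 *\<^sub>R (z - p)" by simp
    show ?thesis unfolding eq sq_expand by simp
  qed
  have "((norm (z - y))^2 - (norm (p - y))^2) / (2 * \<alpha>) \<ge> ((p - y) \<bullet> (z - p)) / \<alpha>"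
    using e alpha_pos by (simp add: field_simps)
  with assms[of z] show "gsum g k p + (norm (p - y))\<^sup>2 / (2 * \<alpha>) \<le> gsum g k z + (norm (z - y))\<^sup>2 / (2 * \<alpha>)"
    by (simp add: diff_divide_distrib)
qed

lemma prox_nonexp: "norm (prox (gsum g k) \<alpha> y1 - prox (gsum g k) \<alpha> y2) \<le> norm (y1 - y2)"
proof -
  define p1 where "p1 = prox (gsum g k) \<alpha> y1"
  define p2 where "p2 = prox (gsum g k) \<alpha> y2"
  have v1: "gsum g k p2 - gsum g k p1 + ((p1 - y1) \<bullet> (p2 - p1)) / \<alpha> \<ge> 0"
    using prox_VI[OF prox_P] p1_def by simp
  have v2: "gsum g k p1 - gsum g k p2 + ((p2 - y2) \<bullet> (p1 - p2)) / \<alpha> \<ge> 0"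
    using prox_VI[OF prox_P] p2_def by simp
  have "((p1 - y1) \<bullet> (p2 - p1))/\<alpha> + ((p2 - y2) \<bullet> (p1 - p2))/\<alpha> \<ge> 0"
    using v1 v2 by linarith
  then have "(((p1 - y1) \<bullet> (p2 - p1)) + ((p2 - y2) \<bullet> (p1 - p2)))/\<alpha> \<ge> 0"
    by (simp add: add_divide_distrib)
  then have "((p1 - y1) \<bullet> (p2 - p1)) + ((p2 - y2) \<bullet> (p1 - p2)) \<ge> 0"
    using alpha_pos by (simp add: zero_le_divide_iff)
  moreover have "((p1 - y1) \<bullet> (p2 - p1)) + ((p2 - y2) \<bullet> (p1 - p2)) = (y1 - y2) \<bullet> (p1 - p2) - (norm (p1 - p2))^2"
    by (simp add: power2_norm_eq_inner inner_diff_left inner_diff_right inner_commute)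
  ultimately have "(norm (p1 - p2))^2 \<le> (y1 - y2) \<bullet> (p1 - p2)" by linarith
  also have "\<dots> \<le> norm (y1 - y2) * norm (p1 - p2)" by (rule norm_cauchy_schwarz)
  finally have "norm (p1 - p2) * norm (p1 - p2) \<le> norm (y1 - y2) * norm (p1 - p2)" by (simp add: power2_eq_square)
  then have "norm (p1 - p2) \<le> norm (y1 - y2)"
  proof (cases "norm (p1 - p2) = 0")
    case True then show ?thesis by simp
  next
    case False
    then have "norm (p1 - p2) > 0" by simp
    with \<open>norm (p1 - p2) * norm (p1 - p2) \<le> norm (y1 - y2) * norm (p1 - p2)\<close> show ?thesis
      by (simp add: mult_le_cancel_right_pos)
  qed
  then show ?thesis by (simp add: p1_def p2_def)
qed

lemma prox_close: "norm (prox (gsum g k) \<alpha> y - y) \<le> \<alpha> * Lg"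
proof -
  define p where "p = prox (gsum g k) \<alpha> y"
  have v: "gsum g k y - gsum g k p + ((p - y) \<bullet> (y - p)) / \<alpha> \<ge> 0"
    using prox_VI[OF prox_P] p_def by simp
  have "(p - y) \<bullet> (y - p) = -((norm (p - y))^2)"
    by (simp add: power2_norm_eq_inner inner_diff_left inner_diff_right inner_commute)
  with v have "(norm (p - y))^2 / \<alpha> \<le> gsum g k y - gsum g k p" by simp
  also have "\<dots> \<le> Lg * norm (p - y)" using gsum_lip[of k y p] by (simp add: norm_minus_commute)
  finally have "(norm (p - y))^2 \<le> \<alpha> * Lg * norm (p - y)" using alpha_pos by (simp add: field_simps)
  then have "norm (p - y) * norm (p - y) \<le> (\<alpha> * Lg) * norm (p - y)" by (simp add: power2_eq_square)
  then have "norm (p - y) \<le> \<alpha> * Lg"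
  proof (cases "norm (p - y) = 0")
    case True then show ?thesis using alpha_pos Lg_nonneg by simp
  next
    case False
    then have "norm (p - y) > 0" by simp
    with \<open>norm (p - y) * norm (p - y) \<le> (\<alpha> * Lg) * norm (p - y)\<close> show ?thesis
      by (simp add: mult_le_cancel_right_pos)
  qed
  then show ?thesis by (simp add: p_def)
qed

end

lemma mid_aux: "M \<le> (A+B)/2 - (E::real) \<Longrightarrow> A \<le> M \<Longrightarrow> B \<le> A \<Longrightarrow> A \<le> B \<Longrightarrow> E \<le> 0"
proof -
  assume h: "M \<le> (A+B)/2 - (E::real)" "A \<le> M" "B \<le> A" "A \<le> B"
  have "(A+B)/2 = A/2 + B/2" by simp
  with h show ?thesis by linarith
qed

context setting begin

lemma W_symm: "u \<bullet> (W *v v) = (W *v u) \<bullet> v"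
  by (metis dot_lmul_matrix inner_commute W_sym transpose_matrix_vector)

lemma quad_le: "x \<bullet> (W *v x) \<le> (norm x)^2"
proof -
  have "x \<bullet> (W *v x) = (\<Sum>i\<in>UNIV. \<Sum>j\<in>UNIV. W$i$j * (x$i * x$j))"
    by (simp add: inner_vec_def matrix_vector_mult_def sum_distrib_left algebra_simps)
  also have "\<dots> \<le> (\<Sum>i\<in>UNIV. \<Sum>j\<in>UNIV. W$i$j * (((x$i)^2 + (x$j)^2)/2))"
  proof (intro sum_mono mult_left_mono)
    fix i j
    have "0 \<le> (x$i - x$j)^2" by simp
    then show "x$i * x$j \<le> ((x$i)^2 + (x$j)^2)/2" by (simp add: power2_eq_square algebra_simps)
    show "0 \<le> W$i$j" by (rule W_nonneg)
  qed
  also have "\<dots> = (\<Sum>i\<in>UNIV. \<Sum>j\<in>UNIV. W$i$j * (x$i)^2)/2 + (\<Sum>i\<in>UNIV. \<Sum>j\<in>UNIV. W$i$j * (x$j)^2)/2"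
    by (simp add: add_divide_distrib distrib_left sum.distrib sum_divide_distrib)
  also have "(\<Sum>i\<in>UNIV. \<Sum>j\<in>UNIV. W$i$j * (x$i)^2) = (\<Sum>i\<in>UNIV. (x$i)^2)"
    by (simp add: sum_distrib_right[symmetric] W_rows)
  also have "(\<Sum>i\<in>UNIV. \<Sum>j\<in>UNIV. W$i$j * (x$j)^2) = (\<Sum>j\<in>UNIV. (x$j)^2)"
    by (subst sum.swap) (simp add: sum_distrib_right[symmetric] W_cols)
  finally show ?thesis by (simp add: norm2_vec)
qed

lemma quad_B_nonneg: "0 \<le> x \<bullet> ((mat 1 - W) *v x)"
  using quad_le[of x] by (simp add: matrix_vector_mult_diff_rdistrib inner_diff_right power2_norm_eq_inner)

lemma B_symm: "u \<bullet> ((mat 1 - W) *v v) = v \<bullet> ((mat 1 - W) *v u)"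
  using W_symm[of u v] by (simp add: matrix_vector_mult_diff_rdistrib inner_diff_right inner_commute)

lemma cont_f: "continuous_on UNIV (f k i)"
  by (metis f_diff differentiable_imp_continuous_within continuous_at_imp_continuous_on)

lemma fsum_cont: "continuous_on UNIV (fsum f k)"
  unfolding fsum_def
  by (intro continuous_on_sum ballI continuous_on_compose2[OF cont_f[of k]] continuous_intros) auto

lemma quad_cont: "continuous_on UNIV (\<lambda>x::real^'n. x \<bullet> ((mat 1 - W) *v x))"
  by (intro continuous_intros linear_continuous_on matrix_vector_mul_bounded_linear)

lemma fsum_lb: "fsum f k x \<ge> fsum f k 0 + gradf f k 0 \<bullet> x + mf/2 * (norm x)^2"
proof -
  have "fsum f k x = (\<Sum>i\<in>UNIV. f k i (x$i))" by (simp add: fsum_def)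
  also have "\<dots> \<ge> (\<Sum>i\<in>UNIV. f k i 0 + deriv (f k i) 0 * x$i + mf/2 * (x$i)^2)"
  proof (rule sum_mono)
    fix i
    have "f k i (x$i) \<ge> f k i 0 + deriv (f k i) 0 * (x$i - 0) + mfi i/2*(x$i-0)^2"
      by (rule sf_tangent[OF f_diff f_strong])
    moreover have "mf/2 * (x$i)^2 \<le> mfi i/2*(x$i)^2" using mf_le[of i] by (simp add: mult_right_mono)
    ultimately show "f k i 0 + deriv (f k i) 0 * x$i + mf/2 * (x$i)^2 \<le> f k i (x$i)" by simp
  qed
  also have "(\<Sum>i\<in>UNIV. f k i 0 + deriv (f k i) 0 * x$i + mf/2 * (x$i)^2) = fsum f k 0 + gradf f k 0 \<bullet> x + mf/2 * (norm x)^2"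
    by (simp add: fsum_def sum.distrib gradf_nth inner_vec_def norm2_vec sum_distrib_left)
  finally show ?thesis .
qed

lemma fsum_mid: "fsum f k ((1/2) *\<^sub>R (a + b)) \<le> (fsum f k a + fsum f k b)/2 - mf/8 * (norm (a - b))^2"
proof -
  have "fsum f k ((1/2) *\<^sub>R (a + b)) = (\<Sum>i\<in>UNIV. f k i ((a$i + b$i)/2))" by (simp add: fsum_def)
  also have "\<dots> \<le> (\<Sum>i\<in>UNIV. (f k i (a$i) + f k i (b$i))/2 - mf/8 * (a$i - b$i)^2)"
  proof (rule sum_mono)
    fix i
    have "f k i ((a$i + b$i)/2) \<le> (f k i (a$i) + f k i (b$i))/2 - mfi i/8 * (a$i - b$i)^2"
      by (rule sf_midpoint[OF f_strong])
    moreover have "mf/8 * (a$i - b$i)^2 \<le> mfi i/8 * (a$i - b$i)^2" using mf_le[of i] by (simp add: mult_right_mono)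
    ultimately show "f k i ((a$i + b$i)/2) \<le> (f k i (a$i) + f k i (b$i))/2 - mf/8 * (a$i - b$i)^2" by simp
  qed
  also have "\<dots> = (fsum f k a + fsum f k b)/2 - mf/8 * (norm (a - b))^2"
    by (simp add: fsum_def add_divide_distrib sum.distrib sum_subtractf norm2_vec sum_distrib_left sum_divide_distrib)
  finally show ?thesis .
qed

lemma fsum_upper: "fsum f k (p + t *\<^sub>R d) - fsum f k p \<le> t * (gradf f k p \<bullet> d) + t^2 * (Lf * (norm d)^2)"
proof -
  have "fsum f k (p + t *\<^sub>R d) - fsum f k p = (\<Sum>i\<in>UNIV. f k i (p$i + t * d$i) - f k i (p$i))"
    by (simp add: fsum_def sum_subtractf)
  also have "\<dots> \<le> (\<Sum>i\<in>UNIV. deriv (f k i) (p$i) * (t * d$i) + Lf * (t * d$i)^2)"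
  proof (rule sum_mono)
    fix i
    have "f k i (p$i + t * d$i) - f k i (p$i) \<le> deriv (f k i) (p$i) * (t * d$i) + Lfi i * (t * d$i)^2"
      by (rule sf_upper[OF f_diff f_strong less_imp_le[OF mfi_pos] f_smooth])
    moreover have "Lfi i * (t * d$i)^2 \<le> Lf * (t * d$i)^2" using Lfi_le[of i] by (simp add: mult_right_mono)
    ultimately show "f k i (p$i + t * d$i) - f k i (p$i) \<le> deriv (f k i) (p$i) * (t * d$i) + Lf * (t * d$i)^2" by simp
  qed
  also have "\<dots> = t * (gradf f k p \<bullet> d) + t^2 * (Lf * (norm d)^2)"
    by (simp add: sum.distrib gradf_nth inner_vec_def norm2_vec sum_distrib_left power_mult_distrib algebra_simps)
  finally show ?thesis .
qed

definition "Pt k x \<longleftrightarrow> (\<forall>y. phi W \<alpha> f k x + \<alpha> * gsum g k x \<le> phi W \<alpha> f k y + \<alpha> * gsum g k y)"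

lemma xt_ex: "\<exists>x. Pt k x"
proof -
  let ?\<Psi> = "\<lambda>x. phi W \<alpha> f k x + \<alpha> * gsum g k x"
  have c: "continuous_on UNIV ?\<Psi>" unfolding phi_def
    by (intro continuous_intros quad_cont fsum_cont gsum_cont)
  have lb: "?\<Psi> x \<ge> (\<alpha> * mf / 2) * (norm x)^2 - (\<alpha> * norm (gradf f k 0) + \<alpha> * Lg) * norm x + (\<alpha> * fsum f k 0 + \<alpha> * gsum g k 0)" for x
  proof -
    have q: "0 \<le> (1/2) * (x \<bullet> ((mat 1 - W) *v x))" using quad_B_nonneg by simp
    have "gradf f k 0 \<bullet> x \<ge> - (norm (gradf f k 0) * norm x)"
      using norm_cauchy_schwarz[of "- gradf f k 0" x] by simp
    with fsum_lb[of k x] have fl: "fsum f k x \<ge> fsum f k 0 - norm (gradf f k 0) * norm x + mf/2 * (norm x)^2" by linarith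
    have gl: "gsum g k x \<ge> gsum g k 0 - Lg * norm x" using gsum_lip[of k x 0] by simp
    have "\<alpha> * fsum f k x \<ge> \<alpha> * (fsum f k 0 - norm (gradf f k 0) * norm x + mf/2 * (norm x)^2)"
      using fl alpha_pos by (simp add: mult_left_mono)
    moreover have "\<alpha> * gsum g k x \<ge> \<alpha> * (gsum g k 0 - Lg * norm x)"
      using gl alpha_pos by (simp add: mult_left_mono)
    ultimately show ?thesis using q unfolding phi_def by (simp add: algebra_simps)
  qed
  have "\<exists>p. \<forall>z. ?\<Psi> p \<le> ?\<Psi> z"
    by (rule exists_min[OF c lb]) (use alpha_pos mf_pos in simp)
  then show ?thesis by (simp add: Pt_def)
qed

lemma quad_mid: "((1/2) *\<^sub>R (a + b)) \<bullet> (B *v ((1/2) *\<^sub>R (a + b))) = (a \<bullet> (B *v a) + b \<bullet> (B *v b))/2 - ((a - b) \<bullet> (B *v (a - b)))/4"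
  for B :: "real^'n^'n"
  by (simp add: matrix_vector_right_distrib matrix_vector_mult_diff_distrib matrix_vector_mult_scaleR
       inner_add_left inner_add_right inner_diff_left inner_diff_right field_simps)

lemma xt_uniq: assumes "Pt k p" "Pt k q" shows "p = q"
proof -
  let ?\<Psi> = "\<lambda>x. phi W \<alpha> f k x + \<alpha> * gsum g k x"
  let ?m = "(1/2) *\<^sub>R (p + q)"
  have "?\<Psi> ?m \<le> (?\<Psi> p + ?\<Psi> q)/2 - \<alpha> * mf/8 * (norm (p - q))^2"
  proof -
    have q1: "?m \<bullet> ((mat 1 - W) *v ?m) \<le> (p \<bullet> ((mat 1 - W) *v p) + q \<bullet> ((mat 1 - W) *v q))/2"
      using quad_mid[of p q "mat 1 - W"] quad_B_nonneg[of "p - q"] by linarith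
    have f1: "\<alpha> * fsum f k ?m \<le> \<alpha> * ((fsum f k p + fsum f k q)/2 - mf/8 * (norm (p - q))^2)"
      using fsum_mid alpha_pos by (simp add: mult_left_mono)
    have g1: "\<alpha> * gsum g k ?m \<le> \<alpha> * ((gsum g k p + gsum g k q)/2)"
      using convex_midpoint[OF gsum_convex] alpha_pos by (simp add: mult_left_mono)
    show ?thesis using q1 f1 g1 unfolding phi_def by (simp add: algebra_simps)
  qed
  moreover have "?\<Psi> p \<le> ?\<Psi> ?m" "?\<Psi> q \<le> ?\<Psi> p" "?\<Psi> p \<le> ?\<Psi> q" using assms by (auto simp: Pt_def)
  ultimately have "\<alpha> * mf/8 * (norm (p - q))^2 \<le> 0" by (rule mid_aux)
  moreover have "\<alpha> * mf/8 > 0" using alpha_pos mf_pos by simp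
  ultimately have "(norm (p - q))^2 \<le> 0" by (metis mult_le_cancel_left_pos mult_zero_right)
  then show ?thesis by simp
qed

lemma xt_P: "Pt k (xtilde W \<alpha> f g k)"
proof -
  obtain p where p: "Pt k p" using xt_ex by blast
  have "xtilde W \<alpha> f g k = p" unfolding xtilde_def
    by (rule the_equality) (use p xt_uniq in \<open>auto simp: Pt_def\<close>)
  then show ?thesis using p by simp
qed

lemma xt_VI:
  assumes "Pt k p"
  shows "\<alpha> * gsum g k (p + d) - \<alpha> * gsum g k p + d \<bullet> ((mat 1 - W) *v p + \<alpha> *\<^sub>R gradf f k p) \<ge> 0"
proof (rule min_VI[where Q = "phi W \<alpha> f k" and C = "(1/2) * (d \<bullet> ((mat 1 - W) *v d)) + \<alpha> * (Lf * (norm d)^2)"])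
  show "\<alpha> * gsum g k p + phi W \<alpha> f k p \<le> \<alpha> * gsum g k z + phi W \<alpha> f k z" for z
    using assms by (simp add: Pt_def add.commute)
  show "convex_on UNIV (\<lambda>x. \<alpha> * gsum g k x)" using alpha_pos gsum_convex by (intro convex_on_cmul) auto
  fix t :: real
  let ?B = "mat 1 - W"
  have s1: "p \<bullet> (W *v d) = d \<bullet> (W *v p)" using W_symm[of p d] by (simp add: inner_commute)
  have s2: "p \<bullet> d = d \<bullet> p" by (rule inner_commute)
  have qe: "(p + t *\<^sub>R d) \<bullet> (?B *v (p + t *\<^sub>R d)) = p \<bullet> (?B *v p) + 2 * t * (d \<bullet> (?B *v p)) + t^2 * (d \<bullet> (?B *v d))"
    using s1 s2
    by (simp add: matrix_vector_right_distrib matrix_vector_mult_scaleR inner_add_left inner_add_right power2_eq_square algebra_simps)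
  have "phi W \<alpha> f k (p + t *\<^sub>R d) - phi W \<alpha> f k p
        = t * (d \<bullet> (?B *v p)) + t^2 * ((1/2) * (d \<bullet> (?B *v d))) + \<alpha> * (fsum f k (p + t *\<^sub>R d) - fsum f k p)"
    unfolding phi_def qe by (simp add: algebra_simps)
  also have "\<dots> \<le> t * (d \<bullet> (?B *v p)) + t^2 * ((1/2) * (d \<bullet> (?B *v d))) + \<alpha> * (t * (gradf f k p \<bullet> d) + t^2 * (Lf * (norm d)^2))"
    using fsum_upper[of k p t d] alpha_pos by (simp add: mult_left_mono)
  also have "\<dots> = t * (d \<bullet> (?B *v p + \<alpha> *\<^sub>R gradf f k p)) + t^2 * ((1/2) * (d \<bullet> (?B *v d)) + \<alpha> * (Lf * (norm d)^2))"
    by (simp add: inner_add_right inner_commute algebra_simps)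
  finally show "phi W \<alpha> f k (p + t *\<^sub>R d) - phi W \<alpha> f k p \<le> t * (d \<bullet> (?B *v p + \<alpha> *\<^sub>R gradf f k p)) + t^2 * ((1/2) * (d \<bullet> (?B *v d)) + \<alpha> * (Lf * (norm d)^2))" .
qed

lemma xt_fix: "prox (gsum g k) \<alpha> (W *v xtilde W \<alpha> f g k - \<alpha> *\<^sub>R gradf f k (xtilde W \<alpha> f g k)) = xtilde W \<alpha> f g k"
proof -
  let ?p = "xtilde W \<alpha> f g k"
  let ?y = "W *v ?p - \<alpha> *\<^sub>R gradf f k ?p"
  have "Pp k ?y ?p"
  proof (rule P_if_VI)
    fix z
    have v: "\<alpha> * gsum g k (?p + (z - ?p)) - \<alpha> * gsum g k ?p + (z - ?p) \<bullet> ((mat 1 - W) *v ?p + \<alpha> *\<^sub>R gradf f k ?p) \<ge> 0"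
      by (rule xt_VI[OF xt_P])
    have e: "?p - ?y = (mat 1 - W) *v ?p + \<alpha> *\<^sub>R gradf f k ?p"
      by (simp add: matrix_vector_mult_diff_rdistrib)
    have "\<alpha> * (gsum g k z - gsum g k ?p + ((?p - ?y) \<bullet> (z - ?p)) / \<alpha>) = \<alpha> * gsum g k (?p + (z - ?p)) - \<alpha> * gsum g k ?p + (z - ?p) \<bullet> ((mat 1 - W) *v ?p + \<alpha> *\<^sub>R gradf f k ?p)"
      unfolding e using alpha_pos by (simp add: inner_commute field_simps)
    with v have "\<alpha> * (gsum g k z - gsum g k ?p + ((?p - ?y) \<bullet> (z - ?p)) / \<alpha>) \<ge> 0" by simp
    then show "gsum g k z - gsum g k ?p + ((?p - ?y) \<bullet> (z - ?p)) / \<alpha> \<ge> 0"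
      using alpha_pos by (simp add: zero_le_mult_iff)
  qed
  then show ?thesis by (rule prox_eq_if_P)
qed

definition "Ps k x \<longleftrightarrow> (\<forall>y. (\<Sum>i\<in>UNIV. f k i x + g k i x) \<le> (\<Sum>i\<in>UNIV. f k i y + g k i y))"

lemma g_C: obtains C where "\<And>i k. (C i)-lipschitz_on UNIV (g k i)"
proof -
  have "\<forall>i. \<exists>C. \<forall>k. C-lipschitz_on UNIV (g k i)" using g_lip by blast
  then obtain C where "\<forall>i. \<forall>k. (C i)-lipschitz_on UNIV (g k i)" by metis
  then show ?thesis using that by blast
qed

lemma sg_convex: "convex_on UNIV (\<lambda>y::real. \<Sum>i\<in>UNIV. g k i y)"
proof (rule convex_onI)
  fix t :: real and x y :: real
  assume t: "0 < t" "t < 1"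
  have "(\<Sum>i\<in>UNIV. g k i ((1 - t) *\<^sub>R x + t *\<^sub>R y)) \<le> (\<Sum>i\<in>UNIV. (1 - t) * g k i x + t * g k i y)"
    by (rule sum_mono, rule convex_onD[OF g_convex]) (use t in auto)
  also have "\<dots> = (1 - t) * (\<Sum>i\<in>UNIV. g k i x) + t * (\<Sum>i\<in>UNIV. g k i y)"
    by (simp add: sum.distrib sum_distrib_left)
  finally show "(\<Sum>i\<in>UNIV. g k i ((1 - t) *\<^sub>R x + t *\<^sub>R y)) \<le> (1 - t) * (\<Sum>i\<in>UNIV. g k i x) + t * (\<Sum>i\<in>UNIV. g k i y)" .
qed simp

lemma xs_ex: "\<exists>x. Ps k x"
proof -
  obtain C where C: "\<And>i k. (C i)-lipschitz_on UNIV (g k i)" using g_C by blast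
  let ?\<Psi> = "\<lambda>y::real. \<Sum>i\<in>UNIV. f k i y + g k i y"
  have c: "continuous_on UNIV ?\<Psi>"
    by (intro continuous_on_sum continuous_intros cont_f lipschitz_on_continuous_on[OF C])
  have lb: "?\<Psi> y \<ge> (\<Sum>i\<in>UNIV. mfi i/2) * (norm y)^2 - (\<Sum>i\<in>UNIV. C i + \<bar>deriv (f k i) 0\<bar>) * norm y + (\<Sum>i\<in>UNIV. f k i 0 + g k i 0)" for y
  proof -
    have "?\<Psi> y \<ge> (\<Sum>i\<in>UNIV. (f k i 0 + g k i 0) + mfi i/2 * (norm y)^2 - (C i + \<bar>deriv (f k i) 0\<bar>) * norm y)"
    proof (rule sum_mono)
      fix i
      have "f k i y \<ge> f k i 0 + deriv (f k i) 0 * (y - 0) + mfi i/2*(y-0)^2"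
        by (rule sf_tangent[OF f_diff f_strong])
      moreover have "g k i y \<ge> g k i 0 - C i * \<bar>y\<bar>"
        using lipschitz_on_normD[OF C[of i k], of y 0] by simp
      moreover have "deriv (f k i) 0 * y \<ge> - (\<bar>deriv (f k i) 0\<bar> * \<bar>y\<bar>)"
        using abs_ge_minus_self[of "deriv (f k i) 0 * y"] by (simp add: abs_mult)
      ultimately show "(f k i 0 + g k i 0) + mfi i/2 * (norm y)^2 - (C i + \<bar>deriv (f k i) 0\<bar>) * norm y \<le> f k i y + g k i y"
        by (simp add: algebra_simps)
    qed
    also have "(\<Sum>i\<in>UNIV. (f k i 0 + g k i 0) + mfi i/2 * (norm y)^2 - (C i + \<bar>deriv (f k i) 0\<bar>) * norm y)
       = (\<Sum>i\<in>UNIV. mfi i/2) * (norm y)^2 - (\<Sum>i\<in>UNIV. C i + \<bar>deriv (f k i) 0\<bar>) * norm y + (\<Sum>i\<in>UNIV. f k i 0 + g k i 0)"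
      by (simp add: sum.distrib sum_subtractf sum_distrib_right distrib_right)
    finally show ?thesis .
  qed
  have "0 < (\<Sum>i\<in>UNIV. mfi i/2)" by (rule sum_pos) (use mfi_pos in auto)
  then have "\<exists>p. \<forall>z. ?\<Psi> p \<le> ?\<Psi> z" by (rule exists_min[OF c lb])
  then show ?thesis by (simp add: Ps_def)
qed

lemma xs_uniq: assumes "Ps k p" "Ps k q" shows "p = q"
proof -
  let ?\<Psi> = "\<lambda>y::real. \<Sum>i\<in>UNIV. f k i y + g k i y"
  let ?m = "(p + q)/2"
  have "?\<Psi> ?m \<le> (\<Sum>i\<in>UNIV. (f k i p + g k i p + (f k i q + g k i q))/2 - mfi i/8 * (p - q)^2)"
  proof (rule sum_mono)
    fix i
    have "f k i ?m \<le> (f k i p + f k i q)/2 - mfi i/8 * (p - q)^2" by (rule sf_midpoint[OF f_strong])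
    moreover have "g k i ((1/2) *\<^sub>R (p + q)) \<le> (g k i p + g k i q)/2" by (rule convex_midpoint[OF g_convex])
    ultimately show "f k i ?m + g k i ?m \<le> (f k i p + g k i p + (f k i q + g k i q))/2 - mfi i/8 * (p - q)^2"
      by (simp add: field_simps)
  qed
  also have "\<dots> = (?\<Psi> p + ?\<Psi> q)/2 - (\<Sum>i\<in>UNIV. mfi i/8) * (p - q)^2"
    by (simp add: add_divide_distrib sum_subtractf sum_divide_distrib sum.distrib sum_distrib_right)
  finally have m: "?\<Psi> ?m \<le> (?\<Psi> p + ?\<Psi> q)/2 - (\<Sum>i\<in>UNIV. mfi i/8) * (p - q)^2" .
  moreover have "?\<Psi> p \<le> ?\<Psi> ?m" "?\<Psi> q \<le> ?\<Psi> p" "?\<Psi> p \<le> ?\<Psi> q" using assms by (auto simp: Ps_def)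
  ultimately have "(\<Sum>i\<in>UNIV. mfi i/8) * (p - q)^2 \<le> 0" by (rule mid_aux)
  moreover have "0 < (\<Sum>i\<in>UNIV. mfi i/8)" by (rule sum_pos) (use mfi_pos in auto)
  ultimately have "(p - q)^2 \<le> 0" by (metis mult_le_cancel_left_pos mult_zero_right)
  then show ?thesis by simp
qed

lemma xs_P: "Ps k (xstar f g k)"
proof -
  obtain p where p: "Ps k p" using xs_ex by blast
  have "xstar f g k = p" unfolding xstar_def
    by (rule the_equality) (use p xs_uniq in \<open>auto simp: Ps_def\<close>)
  then show ?thesis using p by simp
qed

lemma sum_g_const: "(\<Sum>i\<in>UNIV. g k i y) = gsum g k ((\<chi> i. y)::real^'n)"
  by (simp add: gsum_def)

lemma xs_grad_bound: "\<bar>\<Sum>i\<in>UNIV. deriv (f k i) (xstar f g k)\<bar> \<le> Lg * sqrt (real CARD('n))"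
proof -
  let ?p = "xstar f g k"
  let ?S = "\<Sum>i\<in>UNIV. deriv (f k i) ?p"
  have "(\<Sum>i\<in>UNIV. g k i (?p + (- ?S))) - (\<Sum>i\<in>UNIV. g k i ?p) + ?S * (- ?S) \<ge> 0"
  proof (rule min_VI[where Q = "\<lambda>y. \<Sum>i\<in>UNIV. f k i y" and C = "(\<Sum>i\<in>UNIV. Lfi i) * ?S^2"])
    show "(\<Sum>i\<in>UNIV. g k i ?p) + (\<Sum>i\<in>UNIV. f k i ?p) \<le> (\<Sum>i\<in>UNIV. g k i z) + (\<Sum>i\<in>UNIV. f k i z)" for z
      using xs_P[of k] by (simp add: Ps_def sum.distrib add.commute)
    show "convex_on UNIV (\<lambda>y. \<Sum>i\<in>UNIV. g k i y)" by (rule sg_convex)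
    fix t :: real
    have "(\<Sum>i\<in>UNIV. f k i (?p + t *\<^sub>R - ?S)) - (\<Sum>i\<in>UNIV. f k i ?p) = (\<Sum>i\<in>UNIV. f k i (?p + t * - ?S) - f k i ?p)"
      by (simp add: sum_subtractf)
    also have "\<dots> \<le> (\<Sum>i\<in>UNIV. deriv (f k i) ?p * (t * - ?S) + Lfi i * (t * - ?S)^2)"
      by (rule sum_mono, rule sf_upper[OF f_diff f_strong less_imp_le[OF mfi_pos] f_smooth])
    also have "\<dots> = (\<Sum>i\<in>UNIV. deriv (f k i) ?p) * (t * - ?S) + (\<Sum>i\<in>UNIV. Lfi i) * (t * - ?S)^2"
      by (simp only: sum.distrib sum_distrib_right)
    also have "\<dots> = t * (?S * - ?S) + t^2 * ((\<Sum>i\<in>UNIV. Lfi i) * ?S^2)"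
      by (simp add: power2_eq_square algebra_simps)
    finally show "(\<Sum>i\<in>UNIV. f k i (?p + t *\<^sub>R - ?S)) - (\<Sum>i\<in>UNIV. f k i ?p) \<le> t * (?S * - ?S) + t^2 * ((\<Sum>i\<in>UNIV. Lfi i) * ?S^2)" .
  qed
  then have "?S^2 \<le> (\<Sum>i\<in>UNIV. g k i (?p - ?S)) - (\<Sum>i\<in>UNIV. g k i ?p)" by (simp add: power2_eq_square)
  also have "\<dots> = gsum g k ((\<chi> i. ?p - ?S)::real^'n) - gsum g k (\<chi> i. ?p)" by (simp only: sum_g_const)
  also have "\<dots> \<le> Lg * norm (((\<chi> i. ?p - ?S)::real^'n) - (\<chi> i. ?p))" by (rule order_trans[OF abs_ge_self gsum_lip])
  also have "((\<chi> i. ?p - ?S)::real^'n) - (\<chi> i. ?p) = (\<chi> i. - ?S)" by (simp add: vec_eq_iff)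
  also have "norm ((\<chi> i. - ?S)::real^'n) = sqrt (real CARD('n)) * \<bar>?S\<bar>" by (simp add: norm_const_vec)
  finally have h: "\<bar>?S\<bar> * \<bar>?S\<bar> \<le> (Lg * sqrt (real CARD('n))) * \<bar>?S\<bar>" by (simp add: power2_eq_square abs_mult_self_eq algebra_simps)
  show ?thesis
  proof (cases "?S = 0")
    case True then show ?thesis using Lg_nonneg by simp
  next
    case False
    then have pos: "\<bar>?S\<bar> > 0" by simp
    show ?thesis using h pos mult_le_cancel_right_pos by metis
  qed
qed

end

context setting begin

definition "eigs = {l. \<exists>v::real^'n. v \<noteq> 0 \<and> W *v v = l *s v}"

lemma eigs_finite: "finite eigs"
proof -
  define ev where "ev l = (SOME v::real^'n. v \<noteq> 0 \<and> W *v v = l *s v)" for l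
  have ev: "ev l \<noteq> 0 \<and> W *v ev l = l *s ev l" if "l \<in> eigs" for l
    using that unfolding eigs_def ev_def by (metis (mono_tags, lifting) mem_Collect_eq someI)
  have inj: "inj_on ev eigs"
  proof (rule inj_onI)
    fix a b assume ab: "a \<in> eigs" "b \<in> eigs" "ev a = ev b"
    then have "a *s ev a = b *s ev a" using ev[of a] ev[of b] by metis
    then have "(a - b) *\<^sub>R ev a = 0" by (simp add: scalar_mult_eq_scaleR algebra_simps)
    then show "a = b" using ev[OF ab(1)] by simp
  qed
  have po: "pairwise orthogonal (ev ` eigs)"
  proof (rule pairwiseI)
    fix x y assume xy: "x \<in> ev ` eigs" "y \<in> ev ` eigs" "x \<noteq> y"
    then obtain a b where a: "a \<in> eigs" "x = ev a" and b: "b \<in> eigs" "y = ev b" by blast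
    have ab: "a \<noteq> b" using xy(3) a(2) b(2) by auto
    have "a * (x \<bullet> y) = (W *v x) \<bullet> y" using ev[OF a(1)] a(2) by (simp add: scalar_mult_eq_scaleR)
    also have "\<dots> = x \<bullet> (W *v y)" using W_symm[of x y] by simp
    also have "\<dots> = b * (x \<bullet> y)" using ev[OF b(1)] b(2) by (simp add: scalar_mult_eq_scaleR)
    finally have "(a - b) * (x \<bullet> y) = 0" by (simp add: algebra_simps)
    then show "orthogonal x y" using ab by (simp add: orthogonal_def)
  qed
  have "0 \<notin> ev ` eigs" using ev by auto
  then have "independent (ev ` eigs)" using po pairwise_orthogonal_independent by blast
  then have "finite (ev ` eigs)" by (rule finiteI_independent)
  then show ?thesis using inj finite_imageD by blast
qed

lemma lambda_min_eq: "lambda_min W = Min eigs"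
  by (simp add: lambda_min_def eigs_def)

lemma W_one: "W *v (1::real^'n) = 1"
  by (simp add: matrix_vector_mult_def vec_eq_iff W_rows)

lemma one_eig: "1 \<in> eigs"
proof -
  have "(1::real^'n) \<noteq> 0" by (simp add: vec_eq_iff)
  then show ?thesis unfolding eigs_def using W_one by (auto intro!: exI[of _ 1])
qed

lemma lambda_min_le1: "lambda_min W \<le> 1"
  unfolding lambda_min_eq using eigs_finite one_eig by (rule Min_le)

lemma rayleigh: "x \<bullet> (W *v x) \<ge> lambda_min W * (norm x)^2"
proof -
  let ?q = "\<lambda>v::real^'n. v \<bullet> (W *v v)"
  have cq: "continuous_on UNIV ?q"
    by (intro continuous_intros linear_continuous_on matrix_vector_mul_bounded_linear)
  have "compact (sphere (0::real^'n) 1)" by simp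
  moreover have "sphere (0::real^'n) 1 \<noteq> {}" by simp
  moreover have "continuous_on (sphere 0 1) ?q" using cq continuous_on_subset by blast
  ultimately obtain u where u: "u \<in> sphere 0 1" "\<And>v. v \<in> sphere 0 1 \<Longrightarrow> ?q u \<le> ?q v"
    using continuous_attains_inf by metis
  define \<mu> where "\<mu> = ?q u"
  have nu: "norm u = 1" using u(1) by simp
  have hom: "?q v \<ge> \<mu> * (norm v)^2" for v
  proof (cases "v = 0")
    case True then show ?thesis by simp
  next
    case False
    let ?w = "(1 / norm v) *\<^sub>R v"
    have "?w \<in> sphere 0 1" using False by simp
    then have "\<mu> \<le> ?q ?w" using u(2) unfolding \<mu>_def by blast
    also have "?q ?w = ?q v / (norm v)^2"
      by (simp add: matrix_vector_mult_scaleR power2_eq_square)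
    finally show ?thesis using False by (simp add: field_simps)
  qed
  define r where "r = W *v u - \<mu> *\<^sub>R u"
  define d where "d = - r"
  have "(\<lambda>_. 0::real) (u + d) - (\<lambda>_. 0::real) u + 2 * (d \<bullet> r) \<ge> 0"
  proof (rule min_VI[where Q = "\<lambda>v. ?q v - \<mu> * (norm v)^2" and C = "?q d - \<mu> * (norm d)^2"])
    show "0 + (?q u - \<mu> * (norm u)\<^sup>2) \<le> 0 + (?q z - \<mu> * (norm z)\<^sup>2)" for z
      using hom[of z] nu by (simp add: \<mu>_def)
    show "convex_on UNIV (\<lambda>_::real^'n. 0::real)" by (simp add: convex_on_const)
    fix t :: real
    have s1: "u \<bullet> (W *v d) = d \<bullet> (W *v u)" using W_symm[of u d] by (simp add: inner_commute)
    have e1: "?q (u + t *\<^sub>R d) = ?q u + 2 * t * (d \<bullet> (W *v u)) + t^2 * ?q d"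
      using s1
      by (simp add: matrix_vector_right_distrib matrix_vector_mult_scaleR inner_add_left inner_add_right power2_eq_square algebra_simps)
    have e2: "(norm (u + t *\<^sub>R d))^2 = (norm u)^2 + 2 * t * (u \<bullet> d) + t^2 * (norm d)^2"
      by (rule sq_expand)
    have e3: "d \<bullet> r = d \<bullet> (W *v u) - \<mu> * (u \<bullet> d)" by (simp add: r_def inner_diff_right inner_commute)
    show "(?q (u + t *\<^sub>R d) - \<mu> * (norm (u + t *\<^sub>R d))^2) - (?q u - \<mu> * (norm u)^2)
        \<le> t * (2 * (d \<bullet> r)) + t^2 * (?q d - \<mu> * (norm d)^2)"
      unfolding e1 e2 e3 by (simp add: algebra_simps)
  qed
  then have "- 2 * (r \<bullet> r) \<ge> 0" by (simp add: d_def)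
  then have "r \<bullet> r \<le> 0" by simp
  then have "r = 0" by (metis inner_eq_zero_iff inner_ge_zero order_antisym)
  then have "W *v u - \<mu> *\<^sub>R u = 0" by (simp add: r_def)
  then have "W *v u = \<mu> *s u" by (simp add: scalar_mult_eq_scaleR)
  moreover have "u \<noteq> 0" using nu by auto
  ultimately have "\<mu> \<in> eigs" unfolding eigs_def by blast
  then have "lambda_min W \<le> \<mu>" unfolding lambda_min_eq using eigs_finite by (simp add: Min_le)
  then have "lambda_min W * (norm x)^2 \<le> \<mu> * (norm x)^2" by (simp add: mult_right_mono)
  also have "\<dots> \<le> ?q x" by (rule hom)
  finally show ?thesis .
qed

end

lemma norm5: "norm (A - B - C + D + E) \<le> norm A + norm B + norm C + norm D + norm (E::'a::real_normed_vector)"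
proof -
  have "norm (A - B - C + D + E) \<le> norm (A - B - C + D) + norm E" by (rule norm_triangle_ineq)
  also have "norm (A - B - C + D) \<le> norm (A - B - C) + norm D" by (rule norm_triangle_ineq)
  also have "norm (A - B - C) \<le> norm (A - B) + norm C" by (rule norm_triangle_ineq4)
  also have "norm (A - B) \<le> norm A + norm B" by (rule norm_triangle_ineq4)
  finally show ?thesis by simp
qed

lemma norm4: "norm (A - B + D + E) \<le> norm A + norm B + norm D + norm (E::'a::real_normed_vector)"
  using norm5[of A B 0 D E] by simp

locale setting2 = setting W f g Lfi mfi Lg \<alpha>
  for W :: "real^'n^'n" and f g :: "nat \<Rightarrow> 'n \<Rightarrow> real \<Rightarrow> real" and Lfi mfi :: "'n \<Rightarrow> real" and Lg \<alpha> :: real +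
  assumes alpha_lt1: "\<alpha> < (1 + lambda_min W) / Max (range Lfi)"
    and alpha_lt2: "\<alpha> < 2 / (Max (range Lfi) + Min (range mfi))"
begin

abbreviation "c0 \<equiv> sqrt (1 - 2 * \<alpha> * mf * Lf / (mf + Lf))"
abbreviation "zeta \<equiv> max \<bar>1 - (1 - lambda_min W + \<alpha> * Lf)\<bar> \<bar>1 - \<alpha> * mf\<bar>"

lemma W_entry_sym: "W $ j $ i = W $ i $ j"
  using W_sym by (metis transpose_def vec_lambda_beta)

lemma T_bound:
  fixes v u :: "real^'n"
  assumes mono: "\<And>i. mf * (v$i)^2 \<le> u$i * v$i" and lip: "\<And>i. \<bar>u$i\<bar> \<le> Lf * \<bar>v$i\<bar>"
  shows "norm (W *v v - \<alpha> *\<^sub>R u) \<le> zeta * norm v"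
proof -
  define \<kappa> where "\<kappa> i = (if v$i = 0 then mf else u$i / v$i)" for i
  have uk: "u$i = \<kappa> i * v$i" for i
  proof (cases "v$i = 0")
    case True then have "u$i = 0" using lip[of i] by simp
    then show ?thesis using True by (simp add: \<kappa>_def)
  next
    case False then show ?thesis by (simp add: \<kappa>_def)
  qed
  have kb: "mf \<le> \<kappa> i \<and> \<kappa> i \<le> Lf" for i
  proof (cases "v$i = 0")
    case True then show ?thesis using mf_le_Lf by (simp add: \<kappa>_def)
  next
    case False
    then have p: "(v$i)^2 > 0" by simp
    have "mf * (v$i)^2 \<le> \<kappa> i * (v$i)^2" using mono[of i] uk[of i] by (simp add: power2_eq_square mult.assoc)
    then have "mf \<le> \<kappa> i" using p by (simp add: mult_le_cancel_right)
    moreover have "\<bar>\<kappa> i\<bar> * \<bar>v$i\<bar> \<le> Lf * \<bar>v$i\<bar>" using lip[of i] uk[of i] by (simp add: abs_mult)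
    then have "\<bar>\<kappa> i\<bar> \<le> Lf" using False by (simp add: mult_le_cancel_right)
    ultimately show ?thesis by simp
  qed
  define T where "T = (\<chi> i j. W$i$j - (if i = j then \<alpha> * \<kappa> i else 0))"
  have Tv: "T *v w = W *v w - \<alpha> *\<^sub>R (\<chi> i. \<kappa> i * w$i)" for w
  proof -
    have d: "(\<Sum>j\<in>UNIV. (if i = j then \<alpha> * \<kappa> i else 0) * w$j) = \<alpha> * (\<kappa> i * w$i)" for i
    proof -
      have eq: "(\<lambda>j. (if i = j then \<alpha> * \<kappa> i else 0) * w$j) = (\<lambda>j. if i = j then \<alpha> * \<kappa> i * w$j else 0)" by auto
      show ?thesis by (simp only: eq) (simp add: sum.delta)
    qed
    show ?thesis
      by (simp add: T_def matrix_vector_mult_def vec_eq_iff left_diff_distrib sum_subtractf d[symmetric]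
          cong: if_cong)
  qed
  have Tsym: "transpose T = T"
    by (simp add: T_def transpose_def vec_eq_iff W_entry_sym)
  have q: "\<bar>w \<bullet> (T *v w)\<bar> \<le> zeta * (norm w)^2" for w
  proof -
    have ee: "w \<bullet> (\<chi> i. \<kappa> i * w$i) = (\<Sum>i\<in>UNIV. \<kappa> i * (w$i)^2)"
      by (simp add: inner_vec_def power2_eq_square mult.commute mult.left_commute)
    have e: "w \<bullet> (T *v w) = w \<bullet> (W *v w) - \<alpha> * (\<Sum>i\<in>UNIV. \<kappa> i * (w$i)^2)"
      by (simp add: Tv inner_diff_right ee)
    have s1: "mf * (norm w)^2 \<le> (\<Sum>i\<in>UNIV. \<kappa> i * (w$i)^2)"
      unfolding norm2_vec sum_distrib_left by (rule sum_mono) (use kb in \<open>simp add: mult_right_mono\<close>)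
    have s2: "(\<Sum>i\<in>UNIV. \<kappa> i * (w$i)^2) \<le> Lf * (norm w)^2"
      unfolding norm2_vec sum_distrib_left by (rule sum_mono) (use kb in \<open>simp add: mult_right_mono\<close>)
    have lo: "(lambda_min W - \<alpha> * Lf) * (norm w)^2 \<le> w \<bullet> (T *v w)"
    proof -
      have "\<alpha> * (\<Sum>i\<in>UNIV. \<kappa> i * (w$i)^2) \<le> \<alpha> * (Lf * (norm w)^2)" using s2 alpha_pos by (simp add: mult_left_mono)
      then show ?thesis using rayleigh[of w] e by (simp add: algebra_simps)
    qed
    have hi: "w \<bullet> (T *v w) \<le> (1 - \<alpha> * mf) * (norm w)^2"
    proof -
      have "\<alpha> * (mf * (norm w)^2) \<le> \<alpha> * (\<Sum>i\<in>UNIV. \<kappa> i * (w$i)^2)" using s1 alpha_pos by (simp add: mult_left_mono)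
      then show ?thesis using quad_le[of w] e by (simp add: algebra_simps)
    qed
    have z1: "\<bar>lambda_min W - \<alpha> * Lf\<bar> \<le> zeta" by simp
    have z2: "\<bar>1 - \<alpha> * mf\<bar> \<le> zeta" by simp
    have n0: "0 \<le> (norm w)^2" by simp
    have "- (zeta * (norm w)^2) \<le> w \<bullet> (T *v w)"
    proof -
      have "- zeta \<le> lambda_min W - \<alpha> * Lf" using z1 by linarith
      then have "- zeta * (norm w)^2 \<le> (lambda_min W - \<alpha> * Lf) * (norm w)^2" using n0 by (rule mult_right_mono)
      then show ?thesis using lo by simp
    qed
    moreover have "w \<bullet> (T *v w) \<le> zeta * (norm w)^2"
    proof -
      have "1 - \<alpha> * mf \<le> zeta" using z2 by linarith
      then have "(1 - \<alpha> * mf) * (norm w)^2 \<le> zeta * (norm w)^2" using n0 by (rule mult_right_mono)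
      then show ?thesis using hi by simp
    qed
    ultimately show ?thesis by (intro abs_leI) (auto simp: minus_le_iff)
  qed
  have "norm (T *v v) \<le> zeta * norm v" by (rule sym_norm_bound[OF Tsym q])
  moreover have "T *v v = W *v v - \<alpha> *\<^sub>R u"
    by (simp add: Tv vec_eq_iff uk)
  ultimately show ?thesis by simp
qed

lemma row3:
  fixes x e :: "real^'n"
  shows "norm (prox (gsum g k) \<alpha> (W *v x - \<alpha> *\<^sub>R gradf f k x) + e - xtilde W \<alpha> f g k)
     \<le> zeta * norm (x - xtilde W \<alpha> f g k) + norm e"
proof -
  let ?t = "xtilde W \<alpha> f g k"
  let ?y = "\<lambda>z. W *v z - \<alpha> *\<^sub>R gradf f k z"
  have "prox (gsum g k) \<alpha> (?y x) + e - ?t = (prox (gsum g k) \<alpha> (?y x) - prox (gsum g k) \<alpha> (?y ?t)) + e"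
    using xt_fix[of k] by simp
  then have "norm (prox (gsum g k) \<alpha> (?y x) + e - ?t) \<le> norm (prox (gsum g k) \<alpha> (?y x) - prox (gsum g k) \<alpha> (?y ?t)) + norm e"
    by (metis norm_triangle_ineq)
  also have "norm (prox (gsum g k) \<alpha> (?y x) - prox (gsum g k) \<alpha> (?y ?t)) \<le> norm (?y x - ?y ?t)"
    by (rule prox_nonexp)
  also have "?y x - ?y ?t = W *v (x - ?t) - \<alpha> *\<^sub>R (gradf f k x - gradf f k ?t)"
    by (simp add: matrix_vector_mult_diff_distrib scaleR_diff_right)
  also have "norm \<dots> \<le> zeta * norm (x - ?t)"
  proof (rule T_bound)
    fix i
    show "mf * ((x - ?t)$i)^2 \<le> (gradf f k x - gradf f k ?t)$i * (x - ?t)$i"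
      using fd_mono[of "x$i" "?t$i" k i] by (simp add: gradf_nth)
    show "\<bar>(gradf f k x - gradf f k ?t)$i\<bar> \<le> Lf * \<bar>(x - ?t)$i\<bar>"
      using fd_lip[of k i "x$i" "?t$i"] by (simp add: gradf_nth)
  qed
  finally show ?thesis by simp
qed

lemma WJ: "W *v x - avg_mat *v x = (W - avg_mat) *v (x - avg_mat *v (x::real^'n))"
  by (simp add: matrix_vector_mult_diff_rdistrib matrix_vector_mult_diff_distrib W_avg[OF W_rows] avg_idem)

lemma rho_bound: "norm ((W - avg_mat) *v z) \<le> rhoW W * norm z"
  unfolding rhoW_def by (rule onorm) simp

lemma row2:
  fixes x e :: "real^'n"
  assumes s: "norm ((mat 1 - W) *v xtilde W \<alpha> f g k) \<le> s"
  defines "x' \<equiv> prox (gsum g k) \<alpha> (W *v x - \<alpha> *\<^sub>R gradf f k x) + e"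
  shows "norm (x' - avg_mat *v x') \<le> rhoW W * norm (x - avg_mat *v x) + \<alpha> * Lf * norm (x - xtilde W \<alpha> f g k)
            + (2 * \<alpha> * Lg + s) + norm e"
proof -
  let ?t = "xtilde W \<alpha> f g k"
  let ?J = "\<lambda>z. avg_mat *v (z::real^'n)"
  let ?R = "\<lambda>z. z - avg_mat *v (z::real^'n)"
  define y where "y = W *v x - \<alpha> *\<^sub>R gradf f k x"
  define P where "P = prox (gsum g k) \<alpha> y"
  have x': "x' = P + e" by (simp add: x'_def P_def y_def)
  have dec: "x' - ?J x' = (W - avg_mat) *v (x - ?J x) - \<alpha> *\<^sub>R ?R (gradf f k x) + ?R (P - y) + ?R e"
    unfolding x' using WJ[of x]
    by (simp add: y_def matrix_vector_right_distrib matrix_vector_mult_diff_distrib matrix_vector_mult_scaleR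
        avg_W[OF W_cols] algebra_simps)
  have b1: "norm ((W - avg_mat) *v (x - ?J x)) \<le> rhoW W * norm (x - ?J x)" by (rule rho_bound)
  have gt: "\<alpha> * norm (gradf f k ?t) \<le> \<alpha> * Lg + s"
  proof -
    let ?yt = "W *v ?t - \<alpha> *\<^sub>R gradf f k ?t"
    have "\<alpha> *\<^sub>R gradf f k ?t = (prox (gsum g k) \<alpha> ?yt - ?yt) - (mat 1 - W) *v ?t"
      using xt_fix[of k] by (simp add: matrix_vector_mult_diff_rdistrib)
    then have "norm (\<alpha> *\<^sub>R gradf f k ?t) \<le> norm (prox (gsum g k) \<alpha> ?yt - ?yt) + norm ((mat 1 - W) *v ?t)"
      by (metis norm_triangle_ineq4)
    then show ?thesis using prox_close[of k ?yt] s alpha_pos by simp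
  qed
  have b2: "norm (\<alpha> *\<^sub>R ?R (gradf f k x)) \<le> \<alpha> * Lf * norm (x - ?t) + \<alpha> * Lg + s"
  proof -
    have "norm (\<alpha> *\<^sub>R ?R (gradf f k x)) \<le> \<alpha> * norm (gradf f k x)"
      using avg_res_norm_le[of "gradf f k x"] alpha_pos by (simp add: mult_left_mono)
    also have "norm (gradf f k x) \<le> norm (gradf f k x - gradf f k ?t) + norm (gradf f k ?t)"
      using norm_triangle_ineq[of "gradf f k x - gradf f k ?t" "gradf f k ?t"] by simp
    then have "\<alpha> * norm (gradf f k x) \<le> \<alpha> * norm (gradf f k x - gradf f k ?t) + \<alpha> * norm (gradf f k ?t)"
      using alpha_pos by (simp add: mult_left_mono distrib_left[symmetric])
    also have "\<alpha> * norm (gradf f k x - gradf f k ?t) \<le> \<alpha> * (Lf * norm (x - ?t))"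
      using gradf_lip alpha_pos by (simp add: mult_left_mono)
    finally show ?thesis using gt by (simp add: algebra_simps)
  qed
  have b3: "norm (?R (P - y)) \<le> \<alpha> * Lg"
    using avg_res_norm_le[of "P - y"] prox_close[of k y] by (simp add: P_def)
  have b4: "norm (?R e) \<le> norm e" by (rule avg_res_norm_le)
  have "norm (x' - ?J x') \<le> norm ((W - avg_mat) *v (x - ?J x)) + norm (\<alpha> *\<^sub>R ?R (gradf f k x)) + norm (?R (P - y)) + norm (?R e)"
    unfolding dec by (rule norm4)
  then show ?thesis using b1 b2 b3 b4 by simp
qed

end

context setting2 begin

lemma alpha_le2: "\<alpha> \<le> 2 / (mf + Lf)" using alpha_lt2 by (simp add: add.commute)

lemma row1:
  fixes x e :: "real^'n" and k :: nat
  defines "x' \<equiv> prox (gsum g k) \<alpha> (W *v x - \<alpha> *\<^sub>R gradf f k x) + e"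
  shows "norm (avg_mat *v x' - xstar_vec f g k) \<le> c0 * norm (avg_mat *v x - xstar_vec f g k)
           + \<alpha> * Lf * norm (x - avg_mat *v x) + 2 * \<alpha> * Lg + norm e"
proof -
  define N where "N = real CARD('n)"
  have Npos: "N > 0" by (simp add: N_def)
  define a where "a = (\<Sum>j\<in>UNIV. x$j) / N"
  define z where "z = xstar f g k"
  define H where "H t = (\<Sum>j\<in>UNIV. deriv (f k j) t) / N" for t
  define y where "y = W *v x - \<alpha> *\<^sub>R gradf f k x"
  define P where "P = prox (gsum g k) \<alpha> y"
  have x': "x' = P + e" by (simp add: x'_def P_def y_def)
  have Jx: "avg_mat *v x = (\<chi> i. a)" by (simp add: avg_mv a_def N_def)
  have xs: "xstar_vec f g k = (\<chi> i. z)" by (simp add: xstar_vec_def z_def)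
  have JG: "avg_mat *v gradf f k (\<chi> i. t) = (\<chi> i. H t)" for t
    by (simp add: avg_mv gradf_nth H_def N_def)
  have Jy: "avg_mat *v y = avg_mat *v x - \<alpha> *\<^sub>R (avg_mat *v gradf f k x)"
    by (simp add: y_def avg_W[OF W_cols] matrix_vector_mult_diff_distrib matrix_vector_mult_scaleR)
  have dec: "avg_mat *v x' - xstar_vec f g k = (\<chi> i. (a - z) - \<alpha> * (H a - H z))
      - \<alpha> *\<^sub>R (avg_mat *v (gradf f k x - gradf f k (\<chi> i. a))) - \<alpha> *\<^sub>R (\<chi> i. H z)
      + avg_mat *v (P - y) + avg_mat *v e"
  proof -
    have "avg_mat *v (gradf f k x - gradf f k (\<chi> i. a)) = avg_mat *v gradf f k x - (\<chi> i. H a)"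
      by (simp add: matrix_vector_mult_diff_distrib JG)
    moreover have "avg_mat *v (P - y) = avg_mat *v P - ((\<chi> i. a) - \<alpha> *\<^sub>R (avg_mat *v gradf f k x))"
      by (simp add: matrix_vector_mult_diff_distrib Jy Jx)
    moreover have "avg_mat *v x' = avg_mat *v P + avg_mat *v e" by (simp add: x' matrix_vector_right_distrib)
    ultimately show ?thesis by (simp add: xs vec_eq_iff algebra_simps)
  qed
  have mono: "mf * (a - z)^2 \<le> (H a - H z) * (a - z)"
  proof -
    have s1: "(\<Sum>j\<in>UNIV. (deriv (f k j) a - deriv (f k j) z) * (a - z)) = ((\<Sum>j\<in>UNIV. deriv (f k j) a) - (\<Sum>j\<in>UNIV. deriv (f k j) z)) * (a - z)"
      by (simp only: sum_distrib_right[symmetric] sum_subtractf)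
    have "(H a - H z) * (a - z) = (\<Sum>j\<in>UNIV. (deriv (f k j) a - deriv (f k j) z) * (a - z)) / N"
      unfolding s1 H_def by (simp add: diff_divide_distrib[symmetric])
    also have "\<dots> \<ge> (\<Sum>j\<in>(UNIV::'n set). mf * (a - z)^2) / N"
      using Npos by (intro divide_right_mono sum_mono fd_mono) auto
    finally show ?thesis using Npos by (simp add: N_def)
  qed
  have lip: "\<bar>H a - H z\<bar> \<le> Lf * \<bar>a - z\<bar>"
  proof -
    have "\<bar>H a - H z\<bar> = \<bar>\<Sum>j\<in>UNIV. deriv (f k j) a - deriv (f k j) z\<bar> / N"
      using Npos by (simp add: H_def diff_divide_distrib[symmetric] sum_subtractf)
    also have "\<dots> \<le> (\<Sum>j\<in>UNIV. \<bar>deriv (f k j) a - deriv (f k j) z\<bar>) / N"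
      using Npos by (intro divide_right_mono sum_abs) auto
    also have "\<dots> \<le> (\<Sum>j\<in>(UNIV::'n set). Lf * \<bar>a - z\<bar>) / N"
      using Npos by (intro divide_right_mono sum_mono fd_lip) auto
    finally show ?thesis using Npos by (simp add: N_def)
  qed
  have sc: "\<bar>(a - z) - \<alpha> * (H a - H z)\<bar> \<le> c0 * \<bar>a - z\<bar>"
    by (rule scalar_contr[OF mf_pos mf_le_Lf alpha_pos alpha_le2 mono lip])
  have n1: "norm ((\<chi> i. (a - z) - \<alpha> * (H a - H z))::real^'n) \<le> c0 * norm (avg_mat *v x - xstar_vec f g k)"
  proof -
    have e1: "norm ((\<chi> i. (a - z) - \<alpha> * (H a - H z))::real^'n) = sqrt N * \<bar>(a - z) - \<alpha> * (H a - H z)\<bar>"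
      by (simp add: norm_const_vec N_def)
    have ev: "avg_mat *v x - xstar_vec f g k = (\<chi> i. a - z)" by (simp add: Jx xs vec_eq_iff)
    have e2: "norm (avg_mat *v x - xstar_vec f g k) = sqrt N * \<bar>a - z\<bar>" unfolding ev by (simp add: norm_const_vec N_def)
    have "sqrt N * \<bar>(a - z) - \<alpha> * (H a - H z)\<bar> \<le> sqrt N * (c0 * \<bar>a - z\<bar>)"
      using sc by (rule mult_left_mono) (use Npos in simp)
    then show ?thesis unfolding e1 e2 by (simp add: algebra_simps)
  qed
  have n2: "norm (\<alpha> *\<^sub>R (avg_mat *v (gradf f k x - gradf f k (\<chi> i. a)))) \<le> \<alpha> * Lf * norm (x - avg_mat *v x)"
  proof -
    have "norm (avg_mat *v (gradf f k x - gradf f k (\<chi> i. a))) \<le> norm (gradf f k x - gradf f k (\<chi> i. a))"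
      by (rule avg_norm_le)
    also have "\<dots> \<le> Lf * norm (x - (\<chi> i. a))" by (rule gradf_lip)
    finally show ?thesis using alpha_pos Jx by (simp add: mult_left_mono mult.assoc)
  qed
  have n3: "norm (\<alpha> *\<^sub>R ((\<chi> i. H z)::real^'n)) \<le> \<alpha> * Lg"
  proof -
    have S: "\<bar>\<Sum>j\<in>UNIV. deriv (f k j) z\<bar> \<le> Lg * sqrt N" using xs_grad_bound[of k] by (simp add: z_def N_def)
    have "norm ((\<chi> i. H z)::real^'n) = sqrt N * (\<bar>\<Sum>j\<in>UNIV. deriv (f k j) z\<bar> / N)"
      using Npos by (simp add: norm_const_vec N_def H_def)
    also have "\<dots> \<le> sqrt N * (Lg * sqrt N / N)" using S Npos by (intro mult_left_mono divide_right_mono) auto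
    also have "\<dots> = Lg" using Npos by (simp add: field_simps)
    finally show ?thesis using alpha_pos by (simp add: mult_left_mono)
  qed
  have n4: "norm (avg_mat *v (P - y)) \<le> \<alpha> * Lg"
    using avg_norm_le[of "P - y"] prox_close[of k y] by (simp add: P_def)
  have n5: "norm (avg_mat *v e) \<le> norm e" by (rule avg_norm_le)
  have "norm (avg_mat *v x' - xstar_vec f g k) \<le> norm ((\<chi> i. (a - z) - \<alpha> * (H a - H z))::real^'n)
      + norm (\<alpha> *\<^sub>R (avg_mat *v (gradf f k x - gradf f k (\<chi> i. a)))) + norm (\<alpha> *\<^sub>R ((\<chi> i. H z)::real^'n))
      + norm (avg_mat *v (P - y)) + norm (avg_mat *v e)"
    unfolding dec by (rule norm5)
  then show ?thesis using n1 n2 n3 n4 n5 by simp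
qed

end

lemma mv_nth: "(M *v v) $ i = (\<Sum>j\<in>UNIV. M$i$j * v$j)" by (simp add: matrix_vector_mult_def)

lemma mv_mono:
  fixes M :: "real^'m^'m"
  assumes "\<And>i j. 0 \<le> M$i$j" "\<And>j. u$j \<le> v$j"
  shows "(M *v u)$i \<le> (M *v v)$i"
  unfolding mv_nth by (intro sum_mono mult_left_mono assms)

lemma mpow_nonneg:
  fixes A :: "real^'m^'m"
  assumes "\<And>i j. 0 \<le> A$i$j"
  shows "0 \<le> mpow A n $ i $ j"
proof (induction n arbitrary: i j)
  case 0 then show ?case by (simp add: mat_def)
next
  case (Suc n) then show ?case
    by (simp add: matrix_matrix_mult_def assms sum_nonneg)
qed

lemma mv_sum: "M *v (\<Sum>l\<in>S. f l) = (\<Sum>l\<in>S. M *v f l)" for M :: "real^'m^'m"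
  by (induct S rule: infinite_finite_induct) (auto simp: matrix_vector_right_distrib)

definition ut3 :: "real^3^3 \<Rightarrow> bool" where
  "ut3 B \<longleftrightarrow> B$2$1 = 0 \<and> B$3$1 = 0 \<and> B$3$2 = 0"

lemma ut3_mult:
  assumes "ut3 A" "ut3 B"
  shows "ut3 (A ** B) \<and> (\<forall>i. (A ** B)$i$i = A$i$i * B$i$i)"
  using assms by (simp add: ut3_def matrix_matrix_mult_def sum_3 forall_3)

lemma mpow_ut3:
  assumes "ut3 A"
  shows "ut3 (mpow A n) \<and> (\<forall>i. mpow A n $i$i = (A$i$i)^n)"
proof (induction n)
  case 0 then show ?case by (simp add: ut3_def mat_def)
next
  case (Suc n)
  then show ?case using ut3_mult[OF assms, of "mpow A n"] by simp
qed

lemma eig_ut3: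
  fixes B :: "real^3^3" and v :: "complex^3"
  assumes u: "ut3 B" and v: "v \<noteq> 0" and e: "cmat B *v v = \<mu> *s v"
  shows "\<exists>i. \<mu> = complex_of_real (B$i$i)"
proof -
  have c: "(cmat B *v v)$i = (\<mu> *s v)$i" for i using e by simp
  have r1: "of_real (B$1$1) * v$1 + of_real (B$1$2) * v$2 + of_real (B$1$3) * v$3 = \<mu> * v$1"
    using c[of 1] by (simp add: mv_nth cmat_def sum_3)
  have r2: "of_real (B$2$2) * v$2 + of_real (B$2$3) * v$3 = \<mu> * v$2"
    using c[of 2] u by (simp add: mv_nth cmat_def sum_3 ut3_def)
  have r3: "of_real (B$3$3) * v$3 = \<mu> * v$3"
    using c[of 3] u by (simp add: mv_nth cmat_def sum_3 ut3_def)
  show ?thesis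
  proof (cases "v$3 = 0")
    case False then show ?thesis using r3 by (intro exI[of _ 3]) simp
  next
    case v3: True
    show ?thesis
    proof (cases "v$2 = 0")
      case False then show ?thesis using r2 v3 by (intro exI[of _ 2]) simp
    next
      case v2: True
      have "v$1 \<noteq> 0" using v v2 v3 by (auto simp: vec_eq_iff forall_3)
      then show ?thesis using r1 v2 v3 by (intro exI[of _ 1]) simp
    qed
  qed
qed

context setting2 begin

abbreviation "AA \<equiv> Amat \<alpha> Lf mf (rhoW W) (lambda_min W)"

lemma AA_entries:
  "AA$1$1 = c0" "AA$1$2 = \<alpha> * Lf" "AA$1$3 = 0"
  "AA$2$1 = 0" "AA$2$2 = rhoW W" "AA$2$3 = \<alpha> * Lf"
  "AA$3$1 = 0" "AA$3$2 = 0" "AA$3$3 = zeta"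
  by (simp_all add: Amat_def Let_def)

lemma rho_nonneg: "0 \<le> rhoW W"
  unfolding rhoW_def by (rule onorm_pos_le) simp

lemma mLf_pos: "0 < mf + Lf" using mf_pos Lf_pos by linarith

lemma c0_arg: "0 \<le> 1 - 2 * \<alpha> * mf * Lf / (mf + Lf)"
proof -
  have mLp: "0 < mf + Lf" by (rule mLf_pos)
  have "2 * \<alpha> * mf * Lf / (mf + Lf) = \<alpha> * (2 * mf * Lf / (mf + Lf))" by simp
  also have "\<dots> \<le> (2 / (mf + Lf)) * (2 * mf * Lf / (mf + Lf))"
  proof -
    have "0 \<le> 2 * mf * Lf / (mf + Lf)" using mf_pos Lf_pos mLp by (intro divide_nonneg_pos mult_nonneg_nonneg) linarith+
    then show ?thesis by (rule mult_right_mono[OF alpha_le2])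
  qed
  also have "\<dots> = 4 * mf * Lf / (mf + Lf)^2" by (simp add: power2_eq_square)
  also have "\<dots> \<le> 1"
  proof -
    have "4 * mf * Lf \<le> (mf + Lf)^2" using zero_le_power2[of "mf - Lf"] by (simp add: power2_eq_square algebra_simps)
    then show ?thesis using mLp by (simp add: divide_le_eq)
  qed
  finally show ?thesis by simp
qed

lemma c0_nonneg: "0 \<le> c0" using c0_arg by simp

lemma zeta_nonneg: "0 \<le> zeta" by (simp add: le_max_iff_disj)

lemma AA_nonneg: "0 \<le> AA$i$j"
proof -
  have "\<forall>i j. 0 \<le> AA$i$j"
    using alpha_pos Lf_pos rho_nonneg c0_nonneg zeta_nonneg unfolding forall_3 AA_entries by simp
  then show ?thesis by blast
qed

lemma AA_ut: "ut3 AA" by (simp add: ut3_def AA_entries)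

lemma step_vec:
  fixes x e :: "real^'n" and k :: nat
  assumes s: "norm ((mat 1 - W) *v xtilde W \<alpha> f g k) \<le> s"
  shows "(dvec W \<alpha> f g k (dpgm_step W \<alpha> f g k e x)) $ j
     \<le> (AA *v dvec W \<alpha> f g k x + (vector [2 * \<alpha> * Lg, 2 * \<alpha> * Lg + s, 0] + norm e *s 1)) $ j"
proof -
  have "j = 1 \<or> j = 2 \<or> j = 3" using exhaust_3 by blast
  moreover have "(dvec W \<alpha> f g k (dpgm_step W \<alpha> f g k e x)) $ 1
     \<le> (AA *v dvec W \<alpha> f g k x + (vector [2 * \<alpha> * Lg, 2 * \<alpha> * Lg + s, 0] + norm e *s 1)) $ 1"
    using row1[of k x e] by (simp add: dvec_def dpgm_step_def xbar_def mv_nth sum_3 AA_entries algebra_simps)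
  moreover have "(dvec W \<alpha> f g k (dpgm_step W \<alpha> f g k e x)) $ 2
     \<le> (AA *v dvec W \<alpha> f g k x + (vector [2 * \<alpha> * Lg, 2 * \<alpha> * Lg + s, 0] + norm e *s 1)) $ 2"
    using row2[OF s, of x e] by (simp add: dvec_def dpgm_step_def xbar_def mv_nth sum_3 AA_entries algebra_simps)
  moreover have "(dvec W \<alpha> f g k (dpgm_step W \<alpha> f g k e x)) $ 3
     \<le> (AA *v dvec W \<alpha> f g k x + (vector [2 * \<alpha> * Lg, 2 * \<alpha> * Lg + s, 0] + norm e *s 1)) $ 3"
    using row3[of k x e] by (simp add: dvec_def dpgm_step_def xbar_def mv_nth sum_3 AA_entries algebra_simps)
  ultimately show ?thesis by blast
qed

lemma inner_bound:
  fixes x0 :: "real^'n" and k :: nat and es :: "nat \<Rightarrow> real^'n"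
  assumes s: "norm ((mat 1 - W) *v xtilde W \<alpha> f g k) \<le> s"
  shows "\<forall>j. (dvec W \<alpha> f g k (dpgm_inner W \<alpha> f g k es x0 n)) $ j
     \<le> (mpow AA n *v dvec W \<alpha> f g k x0
         + (\<Sum>l<n. mpow AA (n - l - 1) *v (vector [2 * \<alpha> * Lg, 2 * \<alpha> * Lg + s, 0] + norm (es l) *s 1))) $ j"
proof (induction n)
  case 0 then show ?case by simp
next
  case (Suc n)
  let ?b = "vector [2 * \<alpha> * Lg, 2 * \<alpha> * Lg + s, 0] :: real^3"
  let ?c = "\<lambda>l. ?b + norm (es l) *s 1"
  let ?d = "\<lambda>y. dvec W \<alpha> f g k y"
  let ?xn = "dpgm_inner W \<alpha> f g k es x0 n"
  let ?R = "mpow AA n *v ?d x0 + (\<Sum>l<n. mpow AA (n - l - 1) *v ?c l)"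
  have eq: "AA *v ?R + ?c n = mpow AA (Suc n) *v ?d x0 + (\<Sum>l<Suc n. mpow AA (Suc n - l - 1) *v ?c l)"
  proof -
    have "AA *v (\<Sum>l<n. mpow AA (n - l - 1) *v ?c l) = (\<Sum>l<n. mpow AA (Suc n - l - 1) *v ?c l)"
    proof -
      have "AA *v (\<Sum>l<n. mpow AA (n - l - 1) *v ?c l) = (\<Sum>l<n. AA *v (mpow AA (n - l - 1) *v ?c l))"
        by (rule mv_sum)
      also have "\<dots> = (\<Sum>l<n. mpow AA (Suc n - l - 1) *v ?c l)"
      proof (rule sum.cong)
        fix l assume "l \<in> {..<n}"
        then have "Suc n - l - 1 = Suc (n - l - 1)" by simp
        then show "AA *v (mpow AA (n - l - 1) *v ?c l) = mpow AA (Suc n - l - 1) *v ?c l"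
          by (simp add: matrix_vector_mul_assoc)
      qed simp
      finally show ?thesis .
    qed
    then show ?thesis
      by (simp add: matrix_vector_right_distrib matrix_vector_mul_assoc)
  qed
  show ?case
  proof
    fix j
    have "?d (dpgm_inner W \<alpha> f g k es x0 (Suc n)) $ j \<le> (AA *v ?d ?xn + ?c n) $ j"
      using step_vec[OF s, of "es n" ?xn j] by simp
    also have "\<dots> = (AA *v ?d ?xn) $ j + ?c n $ j" by simp
    also have "(AA *v ?d ?xn) $ j \<le> (AA *v ?R) $ j"
      by (rule mv_mono[OF AA_nonneg]) (use Suc.IH in blast)
    also have "(AA *v ?R) $ j + ?c n $ j = (AA *v ?R + ?c n) $ j" by simp
    also have "\<dots> = (mpow AA (Suc n) *v ?d x0 + (\<Sum>l<Suc n. mpow AA (Suc n - l - 1) *v ?c l)) $ j"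
      by (simp only: eq)
    finally show "?d (dpgm_inner W \<alpha> f g k es x0 (Suc n)) $ j \<le> (mpow AA (Suc n) *v ?d x0 + (\<Sum>l<Suc n. mpow AA (Suc n - l - 1) *v ?c l)) $ j"
      by simp
  qed
qed

lemma c0_lt1: "\<bar>c0\<bar> < 1"
proof -
  have p: "0 < 2 * \<alpha> * mf * Lf / (mf + Lf)" using alpha_pos mf_pos Lf_pos mLf_pos by (intro divide_pos_pos mult_pos_pos) linarith+
  have "c0 < 1" using p by simp
  then show ?thesis using c0_nonneg by simp
qed

lemma zeta_lt1: "\<bar>zeta\<bar> < 1"
proof -
  have aL: "\<alpha> * Lf < 1 + lambda_min W" using alpha_lt1 Lf_pos by (simp add: pos_less_divide_eq mult.commute)
  have aLp: "0 < \<alpha> * Lf" using alpha_pos Lf_pos by simp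
  have l1: "lambda_min W \<le> 1" by (rule lambda_min_le1)
  have z1: "\<bar>1 - (1 - lambda_min W + \<alpha> * Lf)\<bar> < 1" using aL aLp l1 by linarith
  have amp: "0 < \<alpha> * mf" using mult_pos_pos[OF alpha_pos mf_pos] .
  have "\<alpha> * mf < 2 / (Lf + mf) * mf" using mult_strict_right_mono[OF alpha_lt2 mf_pos] .
  also have "2 / (Lf + mf) * mf \<le> 1"
  proof -
    have pp: "0 < Lf + mf" using mLf_pos by linarith
    have "2 * mf \<le> Lf + mf" using mf_le_Lf by linarith
    then have "(2 * mf) / (Lf + mf) \<le> 1" by (simp only: divide_le_eq_1_pos[OF pp])
    then show ?thesis by simp
  qed
  finally have "\<alpha> * mf < 1" .
  then have z2: "\<bar>1 - \<alpha> * mf\<bar> < 1" using amp by linarith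
  show ?thesis using z1 z2 by simp
qed

lemma eig_part:
  assumes Mo: "Mo \<ge> 1" and rho: "rhoW W < 1"
  shows "\<forall>(\<mu>::complex) (v::complex^3). v \<noteq> 0 \<and> cmat (mpow AA Mo) *v v = \<mu> *s v \<longrightarrow> cmod \<mu> < 1"
proof (intro allI impI, elim conjE)
  fix \<mu> :: complex and v :: "complex^3"
  assume v: "v \<noteq> 0" and e: "cmat (mpow AA Mo) *v v = \<mu> *s v"
  have u: "ut3 (mpow AA Mo)" and d: "\<forall>i. mpow AA Mo $i$i = (AA$i$i)^Mo"
    using mpow_ut3[OF AA_ut] by auto
  obtain i where "\<mu> = complex_of_real (mpow AA Mo $i$i)" using eig_ut3[OF u v e] by blast
  then have cm: "cmod \<mu> = \<bar>AA$i$i\<bar>^Mo" using d by (simp add: power_abs norm_power)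
  have "\<bar>AA$i$i\<bar> < 1"
  proof -
    have "i = 1 \<or> i = 2 \<or> i = 3" using exhaust_3 by blast
    then show ?thesis using c0_lt1 zeta_lt1 rho rho_nonneg by (auto simp: AA_entries)
  qed
  moreover have "\<bar>AA$i$i\<bar>^Mo \<le> \<bar>AA$i$i\<bar>^1"
    using Mo calculation by (intro power_decreasing) auto
  ultimately show "cmod \<mu> < 1" using cm by simp
qed

end

theorem proposition2:
  fixes W :: "real^'n^'n"
    and E :: "'n \<Rightarrow> 'n \<Rightarrow> bool"
    and f g :: "nat \<Rightarrow> 'n \<Rightarrow> real \<Rightarrow> real"
    and Lfi mfi :: "'n \<Rightarrow> real"
    and Lg \<alpha> \<sigma> \<sigma>' \<eta> :: real
    and Mo :: nat
    and M :: "'a measure"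
    and x :: "nat \<Rightarrow> 'a \<Rightarrow> real^'n"
    and e :: "nat \<Rightarrow> nat \<Rightarrow> 'a \<Rightarrow> real^'n"
  defines "Lf \<equiv> Max (range Lfi)"
    and "mf \<equiv> Min (range mfi)"
    and "A \<equiv> Amat \<alpha> (Max (range Lfi)) (Min (range mfi)) (rhoW W) (lambda_min W)"
  assumes N2: "CARD('n) \<ge> 2"
    \<comment> \<open>undirected connected graph\<close>
    and E_sym: "\<And>i j. E i j \<Longrightarrow> E j i"
    and E_conn: "\<And>i j. E\<^sup>*\<^sup>* i j"
    \<comment> \<open>W symmetric doubly stochastic, supported on the graph, 0 < rho(W) < 1\<close>
    and W_sym: "transpose W = W"
    and W_nonneg: "\<And>i j. W $ i $ j \<ge> 0"
    and W_rows: "\<And>i. (\<Sum>j\<in>UNIV. W $ i $ j) = 1"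
    and W_cols: "\<And>j. (\<Sum>i\<in>UNIV. W $ i $ j) = 1"
    and W_graph: "\<And>i j. i \<noteq> j \<Longrightarrow> \<not> E i j \<Longrightarrow> W $ i $ j = 0"
    and rho_pos: "0 < rhoW W" and rho_lt1: "rhoW W < 1"
    \<comment> \<open>f_i(.;t_k): L_{f_i}-smooth and m_{f_i}-strongly convex, constants independent of k\<close>
    and mfi_pos: "\<And>i. mfi i > 0"
    and f_diff: "\<And>k i y. f k i differentiable (at y)"
    and f_smooth: "\<And>k i y z. \<bar>deriv (f k i) y - deriv (f k i) z\<bar> \<le> Lfi i * \<bar>y - z\<bar>"
    and f_strong: "\<And>k i. convex_on UNIV (\<lambda>y. f k i y - mfi i / 2 * y\<^sup>2)"
    \<comment> \<open>g_i(.;t_k): (real-valued, hence closed and proper) convex and Lipschitz, constant independent of k\<close>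
    and g_convex: "\<And>k i. convex_on UNIV (g k i)"
    and g_lip: "\<And>i. \<exists>C. \<forall>k. C-lipschitz_on UNIV (g k i)"
    and Lg_nonneg: "Lg \<ge> 0"
    and Lg_lip: "\<And>k. Lg-lipschitz_on UNIV (gsum g k)"
    \<comment> \<open>step size\<close>
    and alpha_pos: "0 < \<alpha>"
    and alpha_lt1: "\<alpha> < (1 + lambda_min W) / Lf"
    and alpha_lt2: "\<alpha> < 2 / (Lf + mf)"
    \<comment> \<open>drift bounds\<close>
    and sigma_nonneg: "\<sigma> \<ge> 0"
    and drift_star: "\<And>k. norm (xstar_vec f g (Suc k) - xstar_vec f g k) \<le> \<sigma>"
    and drift_tilde: "\<And>k. norm (xtilde W \<alpha> f g (Suc k) - xtilde W \<alpha> f g k) \<le> \<sigma>"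
    and sigma'_bdd: "bdd_above (range (\<lambda>k. norm ((mat 1 - W) *v xtilde W \<alpha> f g k)))"
    and sigma'_def: "\<sigma>' = (SUP k. norm ((mat 1 - W) *v xtilde W \<alpha> f g k))"
    \<comment> \<open>online inexact DPGM with Mo inner steps and random errors with E ||e|| \<le> eta\<close>
    and Mo_pos: "Mo \<ge> 1"
    and P: "prob_space M"
    and e_rv: "\<And>k l. e k l \<in> borel_measurable M"
    and e_int: "\<And>k l. integrable M (\<lambda>\<omega>. norm (e k l \<omega>))"
    and e_bound: "\<And>k l. (\<integral>\<omega>. norm (e k l \<omega>) \<partial>M) \<le> \<eta>"
    and x_rec: "\<And>k \<omega>. x (Suc k) \<omega> = dpgm_inner W \<alpha> f g (Suc k) (\<lambda>l. e k l \<omega>) (x k \<omega>) Mo"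
  shows "(\<forall>k. (\<forall>j. integrable M (\<lambda>\<omega>. dvec W \<alpha> f g k (x k \<omega>) $ j))
              \<and> (\<forall>j. integrable M (\<lambda>\<omega>. dvec W \<alpha> f g (Suc k) (x (Suc k) \<omega>) $ j)) \<longrightarrow>
           (let Ed = (\<lambda>m. \<chi> j. \<integral>\<omega>. dvec W \<alpha> f g m (x m \<omega>) $ j \<partial>M);
                b'' = (\<Sum>l<Mo. mpow A (Mo - l - 1) *v
                          (vector [2 * \<alpha> * Lg, 2 * \<alpha> * Lg + \<sigma>', 0] + \<eta> *s (1::real^3)))
                      + mpow A Mo *v vector [\<sigma>, 0, \<sigma>]
            in (\<forall>j. Ed (Suc k) $ j \<le> (mpow A Mo *v Ed k + b'') $ j)
               \<and> (\<integral>\<omega>. norm (x (Suc k) \<omega> - xstar_vec f g (Suc k)) \<partial>M)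
                   \<le> Ed (Suc k) $ 1 + Ed (Suc k) $ 2))
       \<and> (\<forall>(\<mu>::complex) (v::complex^3). v \<noteq> 0 \<and> cmat (mpow A Mo) *v v = \<mu> *s v \<longrightarrow> cmod \<mu> < 1)"
proof -
  interpret S: setting2 W f g Lfi mfi Lg \<alpha>
  proof unfold_locales
    show "transpose W = W" by (rule W_sym)
    show "\<And>i j. W $ i $ j \<ge> 0" by (rule W_nonneg)
    show "\<And>i. (\<Sum>j\<in>UNIV. W $ i $ j) = 1" by (rule W_rows)
    show "\<And>j. (\<Sum>i\<in>UNIV. W $ i $ j) = 1" by (rule W_cols)
    show "\<And>i. mfi i > 0" by (rule mfi_pos)
    show "\<And>k i y. f k i differentiable (at y)" by (rule f_diff)
    show "\<And>k i y z. \<bar>deriv (f k i) y - deriv (f k i) z\<bar> \<le> Lfi i * \<bar>y - z\<bar>" by (rule f_smooth)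
    show "\<And>k i. convex_on UNIV (\<lambda>y. f k i y - mfi i / 2 * y\<^sup>2)" by (rule f_strong)
    show "\<And>k i. convex_on UNIV (g k i)" by (rule g_convex)
    show "\<And>i. \<exists>C. \<forall>k. C-lipschitz_on UNIV (g k i)" by (rule g_lip)
    show "Lg \<ge> 0" by (rule Lg_nonneg)
    show "\<And>k. Lg-lipschitz_on UNIV (gsum g k)" by (rule Lg_lip)
    show "0 < \<alpha>" by (rule alpha_pos)
    show "\<alpha> < (1 + lambda_min W) / Max (range Lfi)" using alpha_lt1 by (simp add: Lf_def)
    show "\<alpha> < 2 / (Max (range Lfi) + Min (range mfi))" using alpha_lt2 by (simp add: Lf_def mf_def)
  qed
  have AA: "A = S.AA" by (simp add: A_def)
  interpret PS: prob_space M by (rule P)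
  have Pnn: "\<And>n i j. 0 \<le> mpow A n $ i $ j" unfolding AA by (rule mpow_nonneg[OF S.AA_nonneg])
  have part1: "\<forall>k. (\<forall>j. integrable M (\<lambda>\<omega>. dvec W \<alpha> f g k (x k \<omega>) $ j))
              \<and> (\<forall>j. integrable M (\<lambda>\<omega>. dvec W \<alpha> f g (Suc k) (x (Suc k) \<omega>) $ j)) \<longrightarrow>
           (let Ed = (\<lambda>m. \<chi> j. \<integral>\<omega>. dvec W \<alpha> f g m (x m \<omega>) $ j \<partial>M);
                b'' = (\<Sum>l<Mo. mpow A (Mo - l - 1) *v
                          (vector [2 * \<alpha> * Lg, 2 * \<alpha> * Lg + \<sigma>', 0] + \<eta> *s (1::real^3)))
                      + mpow A Mo *v vector [\<sigma>, 0, \<sigma>]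
            in (\<forall>j. Ed (Suc k) $ j \<le> (mpow A Mo *v Ed k + b'') $ j)
               \<and> (\<integral>\<omega>. norm (x (Suc k) \<omega> - xstar_vec f g (Suc k)) \<partial>M)
                   \<le> Ed (Suc k) $ 1 + Ed (Suc k) $ 2)"
  proof (intro allI impI)
    fix k
    assume int: "(\<forall>j. integrable M (\<lambda>\<omega>. dvec W \<alpha> f g k (x k \<omega>) $ j))
              \<and> (\<forall>j. integrable M (\<lambda>\<omega>. dvec W \<alpha> f g (Suc k) (x (Suc k) \<omega>) $ j))"
    define D0 where "D0 \<omega> = dvec W \<alpha> f g k (x k \<omega>)" for \<omega>
    define D1 where "D1 \<omega> = dvec W \<alpha> f g (Suc k) (x (Suc k) \<omega>)" for \<omega>
    have i0: "integrable M (\<lambda>\<omega>. D0 \<omega> $ j)" for j using int by (simp add: D0_def)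
    have i1: "integrable M (\<lambda>\<omega>. D1 \<omega> $ j)" for j using int by (simp add: D1_def)
    define P where "P = mpow A Mo"
    define Q where "Q l = mpow A (Mo - l - 1)" for l
    define bv where "bv = (vector [2 * \<alpha> * Lg, 2 * \<alpha> * Lg + \<sigma>', 0] :: real^3)"
    define vs where "vs = (vector [\<sigma>, 0, \<sigma>] :: real^3)"
    define K where "K j = (P *v vs) $ j + (\<Sum>l<Mo. (Q l *v bv) $ j)" for j
    define U where "U l j = (Q l *v 1) $ j" for l j
    have Unn: "0 \<le> U l j" for l j unfolding U_def Q_def mv_nth by (intro sum_nonneg mult_nonneg_nonneg Pnn) simp
    have s: "norm ((mat 1 - W) *v xtilde W \<alpha> f g (Suc k)) \<le> \<sigma>'"
      unfolding sigma'_def by (rule cSUP_upper[OF _ sigma'_bdd]) simp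
    have drift: "dvec W \<alpha> f g (Suc k) y $ j \<le> (dvec W \<alpha> f g k y + vs) $ j" for y j
    proof -
      have "j = 1 \<or> j = 2 \<or> j = 3" using exhaust_3 by blast
      moreover have "norm (xbar y - xstar_vec f g (Suc k)) \<le> norm (xbar y - xstar_vec f g k) + \<sigma>"
      proof -
        have "norm (xbar y - xstar_vec f g (Suc k)) \<le> norm (xbar y - xstar_vec f g k) + norm (xstar_vec f g (Suc k) - xstar_vec f g k)"
          by (rule order_trans[OF _ norm_triangle_ineq4[of "xbar y - xstar_vec f g k" "xstar_vec f g (Suc k) - xstar_vec f g k"]]) simp
        then show ?thesis using drift_star[of k] by linarith
      qed
      moreover have "norm (y - xtilde W \<alpha> f g (Suc k)) \<le> norm (y - xtilde W \<alpha> f g k) + \<sigma>"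
      proof -
        have "norm (y - xtilde W \<alpha> f g (Suc k)) \<le> norm (y - xtilde W \<alpha> f g k) + norm (xtilde W \<alpha> f g (Suc k) - xtilde W \<alpha> f g k)"
          by (rule order_trans[OF _ norm_triangle_ineq4[of "y - xtilde W \<alpha> f g k" "xtilde W \<alpha> f g (Suc k) - xtilde W \<alpha> f g k"]]) simp
        then show ?thesis using drift_tilde[of k] by linarith
      qed
      ultimately show ?thesis by (auto simp: dvec_def vs_def)
    qed
    have pw: "D1 \<omega> $ j \<le> (\<Sum>i\<in>UNIV. P$j$i * D0 \<omega> $ i) + K j + (\<Sum>l<Mo. U l j * norm (e k l \<omega>))" for \<omega> j
    proof -
      have "D1 \<omega> $ j \<le> (mpow S.AA Mo *v dvec W \<alpha> f g (Suc k) (x k \<omega>)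
         + (\<Sum>l<Mo. mpow S.AA (Mo - l - 1) *v (vector [2 * \<alpha> * Lg, 2 * \<alpha> * Lg + \<sigma>', 0] + norm (e k l \<omega>) *s 1))) $ j"
        using S.inner_bound[OF s, of "\<lambda>l. e k l \<omega>" "x k \<omega>" Mo] by (simp add: D1_def x_rec)
      also have "\<dots> = (P *v dvec W \<alpha> f g (Suc k) (x k \<omega>)) $ j + (\<Sum>l<Mo. (Q l *v (bv + norm (e k l \<omega>) *s 1)) $ j)"
        by (simp add: P_def Q_def bv_def AA)
      also have "(P *v dvec W \<alpha> f g (Suc k) (x k \<omega>)) $ j \<le> (P *v (D0 \<omega> + vs)) $ j"
        unfolding D0_def P_def by (rule mv_mono[OF Pnn drift])
      also have "(P *v (D0 \<omega> + vs)) $ j = (\<Sum>i\<in>UNIV. P$j$i * D0 \<omega> $ i) + (P *v vs) $ j"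
        by (simp add: matrix_vector_right_distrib mv_nth)
      also have "(\<Sum>l<Mo. (Q l *v (bv + norm (e k l \<omega>) *s 1)) $ j) = (\<Sum>l<Mo. (Q l *v bv) $ j) + (\<Sum>l<Mo. U l j * norm (e k l \<omega>))"
        by (simp add: U_def mv_nth distrib_left sum.distrib sum_distrib_left sum_distrib_right mult.commute mult.left_commute)
      finally show ?thesis by (simp add: K_def algebra_simps)
    qed
    have intR: "integrable M (\<lambda>\<omega>. (\<Sum>i\<in>UNIV. P$j$i * D0 \<omega> $ i) + K j + (\<Sum>l<Mo. U l j * norm (e k l \<omega>)))" for j
    proof -
      have a1: "integrable M (\<lambda>\<omega>. \<Sum>i\<in>UNIV. P$j$i * D0 \<omega> $ i)"
        by (rule Bochner_Integration.integrable_sum, rule Bochner_Integration.integrable_mult_right, rule i0)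
      have a2: "integrable M (\<lambda>\<omega>. \<Sum>l<Mo. U l j * norm (e k l \<omega>))"
        by (rule Bochner_Integration.integrable_sum, rule Bochner_Integration.integrable_mult_right, rule e_int)
      have a3: "integrable M (\<lambda>\<omega>. K j)" by (rule PS.integrable_const)
      show ?thesis by (rule Bochner_Integration.integrable_add[OF Bochner_Integration.integrable_add[OF a1 a3] a2])
    qed
    have intEq: "(\<integral>\<omega>. (\<Sum>i\<in>UNIV. P$j$i * D0 \<omega> $ i) + K j + (\<Sum>l<Mo. U l j * norm (e k l \<omega>)) \<partial>M)
        = (\<Sum>i\<in>UNIV. P$j$i * (\<integral>\<omega>. D0 \<omega> $ i \<partial>M)) + K j + (\<Sum>l<Mo. U l j * (\<integral>\<omega>. norm (e k l \<omega>) \<partial>M))" for j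
      using i0 e_int
      by (simp add: integral_add integrable_sum integral_sum integrable_mult_right PS.prob_space)
    define Ed where "Ed = (\<lambda>m. \<chi> j. \<integral>\<omega>. dvec W \<alpha> f g m (x m \<omega>) $ j \<partial>M)"
    define b'' where "b'' = (\<Sum>l<Mo. mpow A (Mo - l - 1) *v
                          (vector [2 * \<alpha> * Lg, 2 * \<alpha> * Lg + \<sigma>', 0] + \<eta> *s (1::real^3)))
                      + mpow A Mo *v vector [\<sigma>, 0, \<sigma>]"
    have c1: "Ed (Suc k) $ j \<le> (mpow A Mo *v Ed k + b'') $ j" for j
    proof -
      have "Ed (Suc k) $ j = (\<integral>\<omega>. D1 \<omega> $ j \<partial>M)" by (simp add: Ed_def D1_def)
      also have "\<dots> \<le> (\<integral>\<omega>. (\<Sum>i\<in>UNIV. P$j$i * D0 \<omega> $ i) + K j + (\<Sum>l<Mo. U l j * norm (e k l \<omega>)) \<partial>M)"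
        by (rule integral_mono[OF i1 intR pw])
      also have "\<dots> = (\<Sum>i\<in>UNIV. P$j$i * (\<integral>\<omega>. D0 \<omega> $ i \<partial>M)) + K j + (\<Sum>l<Mo. U l j * (\<integral>\<omega>. norm (e k l \<omega>) \<partial>M))"
        by (rule intEq)
      also have "(\<Sum>l<Mo. U l j * (\<integral>\<omega>. norm (e k l \<omega>) \<partial>M)) \<le> (\<Sum>l<Mo. U l j * \<eta>)"
        by (intro sum_mono mult_left_mono e_bound Unn)
      also have "(\<Sum>i\<in>UNIV. P$j$i * (\<integral>\<omega>. D0 \<omega> $ i \<partial>M)) + K j + (\<Sum>l<Mo. U l j * \<eta>) = (mpow A Mo *v Ed k + b'') $ j"
        by (simp add: Ed_def D0_def P_def K_def U_def Q_def b''_def bv_def vs_def mv_nth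
            matrix_vector_right_distrib distrib_left sum.distrib sum_distrib_left sum_distrib_right mult.commute mult.left_commute)
      finally show ?thesis by simp
    qed
    have c2: "(\<integral>\<omega>. norm (x (Suc k) \<omega> - xstar_vec f g (Suc k)) \<partial>M) \<le> Ed (Suc k) $ 1 + Ed (Suc k) $ 2"
    proof -
      have pw2: "norm (x (Suc k) \<omega> - xstar_vec f g (Suc k)) \<le> D1 \<omega> $ 1 + D1 \<omega> $ 2" for \<omega>
      proof -
        have "x (Suc k) \<omega> - xstar_vec f g (Suc k) = (xbar (x (Suc k) \<omega>) - xstar_vec f g (Suc k)) + (x (Suc k) \<omega> - xbar (x (Suc k) \<omega>))"
          by simp
        then have "norm (x (Suc k) \<omega> - xstar_vec f g (Suc k)) \<le> norm (xbar (x (Suc k) \<omega>) - xstar_vec f g (Suc k)) + norm (x (Suc k) \<omega> - xbar (x (Suc k) \<omega>))"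
          by (metis norm_triangle_ineq)
        then show ?thesis by (simp add: D1_def dvec_def)
      qed
      have "Ed (Suc k) $ 1 + Ed (Suc k) $ 2 = (\<integral>\<omega>. D1 \<omega> $ 1 + D1 \<omega> $ 2 \<partial>M)"
        using i1 by (simp add: Ed_def D1_def)
      moreover have "(\<integral>\<omega>. norm (x (Suc k) \<omega> - xstar_vec f g (Suc k)) \<partial>M) \<le> (\<integral>\<omega>. D1 \<omega> $ 1 + D1 \<omega> $ 2 \<partial>M)"
      proof (cases "integrable M (\<lambda>\<omega>. norm (x (Suc k) \<omega> - xstar_vec f g (Suc k)))")
        case True
        then show ?thesis using i1 pw2 by (intro Bochner_Integration.integral_mono) auto
      next
        case False
        then have "(\<integral>\<omega>. norm (x (Suc k) \<omega> - xstar_vec f g (Suc k)) \<partial>M) = 0" by (rule not_integrable_integral_eq)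
        moreover have "0 \<le> (\<integral>\<omega>. D1 \<omega> $ 1 + D1 \<omega> $ 2 \<partial>M)"
          by (rule Bochner_Integration.integral_nonneg) (simp add: D1_def dvec_def)
        ultimately show ?thesis by simp
      qed
      ultimately show ?thesis by simp
    qed
    show "let Ed = (\<lambda>m. \<chi> j. \<integral>\<omega>. dvec W \<alpha> f g m (x m \<omega>) $ j \<partial>M);
                b'' = (\<Sum>l<Mo. mpow A (Mo - l - 1) *v
                          (vector [2 * \<alpha> * Lg, 2 * \<alpha> * Lg + \<sigma>', 0] + \<eta> *s (1::real^3)))
                      + mpow A Mo *v vector [\<sigma>, 0, \<sigma>]
            in (\<forall>j. Ed (Suc k) $ j \<le> (mpow A Mo *v Ed k + b'') $ j)
               \<and> (\<integral>\<omega>. norm (x (Suc k) \<omega> - xstar_vec f g (Suc k)) \<partial>M)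
                   \<le> Ed (Suc k) $ 1 + Ed (Suc k) $ 2"
      using c1 c2 unfolding Let_def Ed_def b''_def by blast
  qed
  have part2: "\<forall>(\<mu>::complex) (v::complex^3). v \<noteq> 0 \<and> cmat (mpow A Mo) *v v = \<mu> *s v \<longrightarrow> cmod \<mu> < 1"
    unfolding AA by (rule S.eig_part[OF Mo_pos rho_lt1])
  show ?thesis using part1 part2 by blast
qed

end
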